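(* Consider the multiple-historical-dataset normal setting, the BHM and the BHM-matching normalized power prior (BNPP) described in the context. Define, for $v>0$, $$N_k=\Big(\frac{n_{0k}}{\sigma_{0k}^2}+\frac1v\Big)^{-1},\quad Y_k=\frac{n_{0k}\bar y_{0k}}{\sigma_{0k}^2},\quad C=\sum_{k=1}^K\frac{n_{0k}N_k}{v\sigma_{0k}^2},\quad A=\frac{1+K}{v}-\frac{\sum_{k=1}^KN_k}{v^2},$$ and $$f(v)=\Big[1+\sum_{k=1}^K\frac{n_{0k}/\sigma_{0k}^2}{n_{0k}/\sigma_{0k}^2+1/v}\Big]^{-1},$$ a strictly decreasing bijection from $(0,\infty)$ onto $(1/(K+1),1)$, with $$\Big|\frac{df(v)}{dv}\Big|=f(v)^2\sum_{k=1}^K\frac{n_{0k}}{\sigma_{0k}^2}\Big(\frac{n_{0k}}{\sigma_{0k}^2}+\frac1v\Big)^{-2}v^{-2}.$$ Suppose that the BNPP uses the dataset-specific discounting functions $$h_k(a_0)=\Big(1+\frac{n_{0k}\,f^{-1}(a_0)}{\sigma_{0k}^2}\Big)^{-1}a_0,\qquad k=1,\dots,K,$$ (i.e. with $a_0=f(v)$, $h_k(a_0)=(1+n_{0k}v/\sigma_{0k}^2)^{-1}a_0$), and that the prior density $\pi_a$ of $a_0$ in the BNPP and the prior density $\pi_v$ of $v$ in the BHM satisfy $$Q(f(v))\,\Big|\frac{df(v)}{dv}\Big|\,\pi_a(f(v))\ \propto\ R(v)\,\pi_v(v),\qquad v>0,$$ where $$Q(f(v))=\exp\Big\{-\frac{f(v)}{2C}\Big(\frac1v\sum_{k=1}^KN_kY_k\Big)^2\Big\}\big[f(v)C\big]^{1/2},$$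 $$R(v)=v^{-(K+1)/2}\Big(\prod_{k=1}^KN_k^{1/2}\Big)A^{-1/2}\exp\Big\{\frac{(\sum_{k=1}^KY_kN_k)^2}{2v^2A}\Big\}\exp\Big\{\frac12\sum_{k=1}^KY_k^2N_k\Big\}.$$ Then the marginal posterior density of $\theta$ under the BHM is identical to the marginal posterior density of $\theta$ under the BNPP. Moreover $0<h_k(a_0)<1$ for all $k$.
   Context: Data: current data $y=(y_1,\dots,y_n)$ with $y_i\stackrel{iid}{\sim}N(\theta,\sigma^2)$; $K$ historical datasets $y_{0k}=(y_{0k1},\dots,y_{0kn_{0k}})$, $k=1,\dots,K$, with $y_{0ki}\stackrel{iid}{\sim}N(\theta_{0k},\sigma_{0k}^2)$ in the BHM (and with common mean $\theta$ in the BNPP); $\sigma^2,\sigma_{0k}^2>0$ known. $\bar y$, $\bar y_{0k}$ denote sample means. BHM: $\theta\mid\mu,v\sim N(\mu,v)$, $\theta_{0k}\mid\mu,v\sim N(\mu,v)$ independently for $k=1,\dots,K$, $\pi(\mu)\propto1$ on $\mathbb R$, $v>0$ with prior density $\pi_v$. Its marginal posterior for $\theta$ is $$\pi_{\mathrm{BHM}}(\theta\mid y,y_0)\propto\iiint\pi_v(v)v^{-(K+1)/2}\exp\Big\{-\tfrac{n(\bar y-\theta)^2}{2\sigma^2}-\tfrac12\sum_{k=1}^K\tfrac{n_{0k}(\bar y_{0k}-\theta_{0k})^2}{\sigma_{0k}^2}-\tfrac{(\theta-\mu)^2}{2v}-\tfrac{1}{2v}\sum_{k=1}^K(\theta_{0k}-\mu)^2\Big\}\,d\theta_0\,d\mu\,dv.$$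 BNPP: with $L_k(\theta)=\sigma_{0k}^{-n_{0k}}\exp\{-\frac{1}{2\sigma_{0k}^2}\sum_{i=1}^{n_{0k}}(y_{0ki}-\theta)^2\}$, a scalar global discounting parameter $a_0$ with prior density $\pi_a$, and discounting functions $h_k(a_0)\in(0,1)$, the normalizing constant is $c(a_0)=\int_{\mathbb R}\prod_{k=1}^KL_k(\theta)^{h_k(a_0)}d\theta$ and the marginal posterior of $\theta$ is $$\pi_{\mathrm{BNPP}}(\theta\mid y,y_0)\propto\int\exp\Big\{-\tfrac{1}{2\sigma^2}\sum_{i=1}^n(y_i-\theta)^2\Big\}\frac{\prod_{k=1}^KL_k(\theta)^{h_k(a_0)}}{c(a_0)}\pi_a(a_0)\,da_0.$$ The proportionality in the prior condition is as functions of $v$ (constants not depending on $v$ or $\theta$ are irrelevant); all posteriors are assumed proper. *)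

theory Defs
  imports "HOL-Analysis.Analysis"
begin

text \<open>Conventions: historical datasets are indexed by k in {1..K}; the k-th historical
dataset is y0 k i for i in {1..n0 k}; s0 k is the known variance sigma_{0k}^2.
The current data are y i for i in {1..n}, with known variance s = sigma^2.\<close>

definition mean :: "nat \<Rightarrow> (nat \<Rightarrow> real) \<Rightarrow> real" where
  "mean m x = (\<Sum>i=1..m. x i) / real m"

definition fK :: "nat \<Rightarrow> (nat \<Rightarrow> nat) \<Rightarrow> (nat \<Rightarrow> real) \<Rightarrow> real \<Rightarrow> real" where
  "fK K n0 s0 v = inverse (1 + (\<Sum>k=1..K. (real (n0 k) / s0 k) / (real (n0 k) / s0 k + 1 / v)))"

definition Nk :: "(nat \<Rightarrow> nat) \<Rightarrow> (nat \<Rightarrow> real) \<Rightarrow> real \<Rightarrow> nat \<Rightarrow> real" where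
  "Nk n0 s0 v k = inverse (real (n0 k) / s0 k + 1 / v)"

definition Yk :: "(nat \<Rightarrow> nat) \<Rightarrow> (nat \<Rightarrow> real) \<Rightarrow> (nat \<Rightarrow> nat \<Rightarrow> real) \<Rightarrow> nat \<Rightarrow> real" where
  "Yk n0 s0 y0 k = real (n0 k) * mean (n0 k) (y0 k) / s0 k"

definition Cc :: "nat \<Rightarrow> (nat \<Rightarrow> nat) \<Rightarrow> (nat \<Rightarrow> real) \<Rightarrow> real \<Rightarrow> real" where
  "Cc K n0 s0 v = (\<Sum>k=1..K. real (n0 k) * Nk n0 s0 v k / (v * s0 k))"

definition Aa :: "nat \<Rightarrow> (nat \<Rightarrow> nat) \<Rightarrow> (nat \<Rightarrow> real) \<Rightarrow> real \<Rightarrow> real" where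
  "Aa K n0 s0 v = (1 + real K) / v - (\<Sum>k=1..K. Nk n0 s0 v k) / v\<^sup>2"

text \<open>Q(f(v)), written as a function of v\<close>
definition Qf :: "nat \<Rightarrow> (nat \<Rightarrow> nat) \<Rightarrow> (nat \<Rightarrow> real) \<Rightarrow> (nat \<Rightarrow> nat \<Rightarrow> real) \<Rightarrow> real \<Rightarrow> real" where
  "Qf K n0 s0 y0 v =
     exp (- (fK K n0 s0 v / (2 * Cc K n0 s0 v)) *
            ((1 / v) * (\<Sum>k=1..K. Nk n0 s0 v k * Yk n0 s0 y0 k))\<^sup>2)
     * sqrt (fK K n0 s0 v * Cc K n0 s0 v)"

definition Rf :: "nat \<Rightarrow> (nat \<Rightarrow> nat) \<Rightarrow> (nat \<Rightarrow> real) \<Rightarrow> (nat \<Rightarrow> nat \<Rightarrow> real) \<Rightarrow> real \<Rightarrow> real" where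
  "Rf K n0 s0 y0 v =
     v powr (- (real K + 1) / 2) * (\<Prod>k=1..K. sqrt (Nk n0 s0 v k))
     * Aa K n0 s0 v powr (- 1 / 2)
     * exp ((\<Sum>k=1..K. Yk n0 s0 y0 k * Nk n0 s0 v k)\<^sup>2 / (2 * v\<^sup>2 * Aa K n0 s0 v))
     * exp ((1 / 2) * (\<Sum>k=1..K. (Yk n0 s0 y0 k)\<^sup>2 * Nk n0 s0 v k))"

definition hk :: "nat \<Rightarrow> (nat \<Rightarrow> nat) \<Rightarrow> (nat \<Rightarrow> real) \<Rightarrow> nat \<Rightarrow> real \<Rightarrow> real" where
  "hk K n0 s0 k a0 = inverse (1 + real (n0 k) * inv_into {0<..} (fK K n0 s0) a0 / s0 k) * a0"

definition bhm_kernel :: "nat \<Rightarrow> (nat \<Rightarrow> nat) \<Rightarrow> (nat \<Rightarrow> real) \<Rightarrow> (nat \<Rightarrow> nat \<Rightarrow> real)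
    \<Rightarrow> nat \<Rightarrow> real \<Rightarrow> (nat \<Rightarrow> real) \<Rightarrow> (real \<Rightarrow> real) \<Rightarrow> real \<Rightarrow> ennreal" where
  "bhm_kernel K n0 s0 y0 n s y piv \<theta> =
    (\<integral>\<^sup>+ v. indicator {0<..} v *
      (\<integral>\<^sup>+ \<mu>. (\<integral>\<^sup>+ \<theta>0.
         ennreal (piv v * v powr (- (real K + 1) / 2) *
           exp (- real n * (mean n y - \<theta>)\<^sup>2 / (2 * s)
                - (1 / 2) * (\<Sum>k=1..K. real (n0 k) * (mean (n0 k) (y0 k) - \<theta>0 k)\<^sup>2 / s0 k)
                - (\<theta> - \<mu>)\<^sup>2 / (2 * v)
                - (1 / (2 * v)) * (\<Sum>k=1..K. (\<theta>0 k - \<mu>)\<^sup>2)))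
       \<partial>(PiM {1..K} (\<lambda>_. lborel))) \<partial>lborel) \<partial>lborel)"

definition Lk :: "(nat \<Rightarrow> nat) \<Rightarrow> (nat \<Rightarrow> real) \<Rightarrow> (nat \<Rightarrow> nat \<Rightarrow> real) \<Rightarrow> nat \<Rightarrow> real \<Rightarrow> real" where
  "Lk n0 s0 y0 k \<theta> = sqrt (s0 k) powr (- real (n0 k)) *
     exp (- (1 / (2 * s0 k)) * (\<Sum>i=1..n0 k. (y0 k i - \<theta>)\<^sup>2))"

definition cnorm :: "nat \<Rightarrow> (nat \<Rightarrow> nat) \<Rightarrow> (nat \<Rightarrow> real) \<Rightarrow> (nat \<Rightarrow> nat \<Rightarrow> real) \<Rightarrow> real \<Rightarrow> real" where
  "cnorm K n0 s0 y0 a0 =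
     (\<integral>\<theta>. (\<Prod>k=1..K. Lk n0 s0 y0 k \<theta> powr hk K n0 s0 k a0) \<partial>lborel)"

text \<open>Unnormalized BNPP marginal posterior kernel of theta; a0 ranges over the
  range (1/(K+1), 1) of f, where the discounting functions are defined.\<close>
definition bnpp_kernel :: "nat \<Rightarrow> (nat \<Rightarrow> nat) \<Rightarrow> (nat \<Rightarrow> real) \<Rightarrow> (nat \<Rightarrow> nat \<Rightarrow> real)
    \<Rightarrow> nat \<Rightarrow> real \<Rightarrow> (nat \<Rightarrow> real) \<Rightarrow> (real \<Rightarrow> real) \<Rightarrow> real \<Rightarrow> ennreal" where
  "bnpp_kernel K n0 s0 y0 n s y pia \<theta> =
    (\<integral>\<^sup>+ a0. indicator {1 / (real K + 1)<..<1} a0 *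
       ennreal (exp (- (1 / (2 * s)) * (\<Sum>i=1..n. (y i - \<theta>)\<^sup>2)) *
         (\<Prod>k=1..K. Lk n0 s0 y0 k \<theta> powr hk K n0 s0 k a0) / cnorm K n0 s0 y0 a0 * pia a0)
     \<partial>lborel)"

definition bhm_post where
  "bhm_post K n0 s0 y0 n s y piv \<theta> =
     bhm_kernel K n0 s0 y0 n s y piv \<theta> / (\<integral>\<^sup>+ t. bhm_kernel K n0 s0 y0 n s y piv t \<partial>lborel)"

definition bnpp_post where
  "bnpp_post K n0 s0 y0 n s y pia \<theta> =
     bnpp_kernel K n0 s0 y0 n s y pia \<theta> / (\<integral>\<^sup>+ t. bnpp_kernel K n0 s0 y0 n s y pia t \<partial>lborel)"

end

theory Submission
  imports Defs "HOL-Probability.Probability"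
begin


lemma gauss_eq:
  fixes p b x :: real assumes p: "p > 0"
  shows "exp (- p * x\<^sup>2 / 2 + b * x) = sqrt (2 * pi / p) * exp (b\<^sup>2 / (2 * p)) * normal_density (b / p) (1 / sqrt p) x"
proof -
  have s2: "(1 / sqrt p)\<^sup>2 = 1 / p" using p by (simp add: power_divide)
  have c: "sqrt (2 * pi / p) * (1 / sqrt (2 * pi * (1/p))) = 1" using p
    by (simp add: real_sqrt_divide field_simps)
  have e: "exp (- p * x\<^sup>2 / 2 + b * x) = exp (b\<^sup>2 / (2 * p)) * exp (-(x - b/p)\<^sup>2 / (2 * (1/p)))"
    unfolding exp_add[symmetric] using p by (intro arg_cong[where f=exp]) (simp add: field_simps power2_eq_square)
  have "sqrt (2 * pi / p) * exp (b\<^sup>2 / (2 * p)) * normal_density (b / p) (1 / sqrt p) x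
      = (sqrt (2 * pi / p) * (1 / sqrt (2 * pi * (1/p)))) * (exp (b\<^sup>2 / (2 * p)) * exp (-(x - b/p)\<^sup>2 / (2 * (1/p))))"
    unfolding normal_density_def s2 by (simp only: mult_ac)
  also have "\<dots> = exp (- p * x\<^sup>2 / 2 + b * x)" unfolding c e by simp
  finally show ?thesis by simp
qed

lemma gauss_bochner:
  fixes p b :: real assumes p: "p > 0"
  shows "has_bochner_integral lborel (\<lambda>x. exp (- p * x\<^sup>2 / 2 + b * x)) (sqrt (2 * pi / p) * exp (b\<^sup>2 / (2 * p)))"
proof -
  have "has_bochner_integral lborel (normal_density (b / p) (1 / sqrt p)) 1" using p
    by (simp add: has_bochner_integral_iff)
  from has_bochner_integral_mult_right[OF this, of "sqrt (2 * pi / p) * exp (b\<^sup>2 / (2 * p))"]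
  have "has_bochner_integral lborel (\<lambda>x. sqrt (2 * pi / p) * exp (b\<^sup>2 / (2 * p)) * normal_density (b / p) (1 / sqrt p) x) (sqrt (2 * pi / p) * exp (b\<^sup>2 / (2 * p)))" by simp
  then show ?thesis by (subst (asm) gauss_eq[OF p, symmetric])
qed

lemma gauss_nn:
  fixes p b :: real assumes p: "p > 0"
  shows "(\<integral>\<^sup>+x. ennreal (exp (- p * x\<^sup>2 / 2 + b * x)) \<partial>lborel) = ennreal (sqrt (2 * pi / p) * exp (b\<^sup>2 / (2 * p)))"
  using gauss_bochner[OF p]
  by (subst nn_integral_eq_integral) (auto simp: has_bochner_integral_iff)


lemma subst_decr:
  fixes \<phi> D F :: "real \<Rightarrow> real" and lo hi :: real
  assumes deriv: "\<And>v. v > 0 \<Longrightarrow> (\<phi> has_real_derivative D v) (at v)"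
    and contD: "continuous_on {0<..} D" and Dnp: "\<And>v. v > 0 \<Longrightarrow> D v \<le> 0"
    and img: "\<phi> ` {0<..} = {lo<..<hi}"
    and anti: "\<And>v w. 0 < v \<Longrightarrow> v \<le> w \<Longrightarrow> \<phi> w \<le> \<phi> v"
    and phim[measurable]: "\<phi> \<in> borel_measurable borel" and Dm[measurable]: "D \<in> borel_measurable borel"
    and Fm[measurable]: "(\<lambda>a. indicator {lo<..<hi} a * F a) \<in> borel_measurable borel"
    and Fnn: "\<And>a. a \<in> {lo<..<hi} \<Longrightarrow> F a \<ge> 0"
  shows "(\<integral>\<^sup>+ a. ennreal (indicator {lo<..<hi} a * F a) \<partial>lborel)
       = (\<integral>\<^sup>+ v. ennreal (indicator {0<..} v * (F (\<phi> v) * - D v)) \<partial>lborel)"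
proof -
  define J where "J = {lo<..<hi}"
  define Fi where "Fi a = indicator J a * F a" for a
  have Fim[measurable]: "Fi \<in> borel_measurable borel" using Fm unfolding Fi_def J_def .
  have Fi_nn: "Fi a \<ge> 0" for a using Fnn unfolding Fi_def J_def by (auto split: split_indicator)
  define M where "M m = real (Suc m)" for m :: nat
  have Mpos: "M m > 0" "M m \<ge> 1" for m unfolding M_def by auto
  have Mi: "1 / M m > 0" "1 / M m \<le> 1" for m using Mpos[of m] by auto
  have Minv: "1 / M m \<le> M m" for m using Mi[of m] Mpos[of m] by linarith
  have Mmono: "M m \<le> M m'" "1 / M m' \<le> 1 / M m" if "m \<le> m'" for m m'
  proof -
    show 1: "M m \<le> M m'" using that unfolding M_def by simp
    show "1 / M m' \<le> 1 / M m" using Mpos[of m] Mpos[of m'] 1 by (intro divide_left_mono) auto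
  qed
  define g where "g u = \<phi> (- u)" for u
  define g' where "g' u = D (- u) * -1" for u
  have step: "(\<integral>\<^sup>+x. ennreal (Fi x * indicator {\<phi> (M m) .. \<phi> (1 / M m)} x) \<partial>lborel)
      = (\<integral>\<^sup>+v. ennreal (Fi (\<phi> v) * - D v * indicator {1 / M m .. M m} v) \<partial>lborel)" for m
  proof -
    have ab: "- M m \<le> - (1 / M m)" using Minv[of m] by simp
    have "(\<integral>\<^sup>+x. ennreal (Fi x * indicator {g (- M m) .. g (- (1 / M m))} x) \<partial>lborel)
        = (\<integral>\<^sup>+u. ennreal (Fi (g u) * g' u * indicator {- M m .. - (1 / M m)} u) \<partial>lborel)"
    proof (rule nn_integral_substitution)
      show "set_borel_measurable borel {g (- M m)..g (- (1 / M m))} Fi"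
        unfolding set_borel_measurable_def by measurable
      show "(g has_real_derivative g' x) (at x)" if "x \<in> {- M m..- (1 / M m)}" for x
      proof -
        have "- x > 0" using that Mi(1)[of m] by (simp only: atLeastAtMost_iff) linarith
        then have "(\<phi> has_real_derivative D (- x)) (at (- x))" by (rule deriv)
        moreover have "(uminus has_real_derivative -1) (at x)" by (auto intro!: derivative_eq_intros)
        ultimately show ?thesis
          using DERIV_chain2[where f=\<phi> and g=uminus and x=x and Da="D(-x)" and Db="-1" and s=UNIV]
          unfolding g_def g'_def by simp
      qed
      show "continuous_on {- M m..- (1 / M m)} g'"
        unfolding g'_def
        apply (intro continuous_intros)
        apply (rule continuous_on_compose2[OF contD])
        using Mi(1)[of m] by (auto intro!: continuous_intros simp del: Mi) (meson Mi(1) less_le_trans)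
      show "0 \<le> g' x" if "x \<in> {- M m..- (1 / M m)}" for x
      proof -
        have "- x > 0" using that Mi(1)[of m] by (simp only: atLeastAtMost_iff) linarith
        then show ?thesis using Dnp[of "-x"] unfolding g'_def by simp
      qed
    qed (fact ab)
    also have "\<dots> = (\<integral>\<^sup>+v. ennreal (Fi (g (- v)) * g' (- v) * indicator {- M m .. - (1 / M m)} (- v)) \<partial>lborel)"
      using nn_integral_real_affine[where f="\<lambda>u. ennreal (Fi (g u) * g' u * indicator {- M m .. - (1 / M m)} u)" and c="-1" and t=0]
      unfolding g_def g'_def by simp
    also have "\<dots> = (\<integral>\<^sup>+v. ennreal (Fi (\<phi> v) * - D v * indicator {1 / M m .. M m} v) \<partial>lborel)"
      by (intro nn_integral_cong) (auto simp: g_def g'_def split: split_indicator)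
    finally show ?thesis by (simp add: g_def)
  qed
  have "(\<integral>\<^sup>+ a. ennreal (indicator {lo<..<hi} a * F a) \<partial>lborel)
      = (\<integral>\<^sup>+ x. (SUP m. ennreal (Fi x * indicator {\<phi> (M m) .. \<phi> (1 / M m)} x)) \<partial>lborel)"
  proof (intro nn_integral_cong)
    fix x
    show "ennreal (indicator {lo<..<hi} x * F x) = (SUP m. ennreal (Fi x * indicator {\<phi> (M m) .. \<phi> (1 / M m)} x))"
    proof (cases "x \<in> J")
      case False then show ?thesis by (simp add: Fi_def J_def)
    next
      case True
      then obtain v where v: "v > 0" "x = \<phi> v" using img unfolding J_def by (metis imageE greaterThan_iff)
      obtain m where m: "max v (1 / v) \<le> real m" using real_arch_simple by blast
      have Mv: "M m \<ge> v" using m unfolding M_def by simp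
      have "1 / v \<le> M m" using m unfolding M_def by simp
      then have Mv2: "1 / M m \<le> v" using v(1) Mpos[of m] by (simp add: field_simps)
      have "\<phi> (M m) \<le> x" using anti[OF v(1) Mv] v(2) by simp
      moreover have "x \<le> \<phi> (1 / M m)" using anti[OF Mi(1) Mv2] v(2) by simp
      ultimately have "\<phi> (M m) \<le> x" "x \<le> \<phi> (1 / M m)" by auto
      then have 1: "ennreal (Fi x * indicator {\<phi> (M m) .. \<phi> (1 / M m)} x) = ennreal (Fi x)" by simp
      show ?thesis
      proof (rule antisym)
        show "ennreal (indicator {lo<..<hi} x * F x) \<le> (SUP m. ennreal (Fi x * indicator {\<phi> (M m) .. \<phi> (1 / M m)} x))"
        proof -
          have "ennreal (indicator {lo<..<hi} x * F x) = ennreal (Fi x * indicator {\<phi> (M m) .. \<phi> (1 / M m)} x)"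
            using 1 unfolding Fi_def J_def by simp
          also have "\<dots> \<le> (SUP m. ennreal (Fi x * indicator {\<phi> (M m) .. \<phi> (1 / M m)} x))"
            by (rule SUP_upper) simp
          finally show ?thesis .
        qed
        show "(SUP m. ennreal (Fi x * indicator {\<phi> (M m) .. \<phi> (1 / M m)} x)) \<le> ennreal (indicator {lo<..<hi} x * F x)"
        proof (intro SUP_least ennreal_leI)
          fix m
          have fx: "indicator {lo<..<hi} x * F x = Fi x" by (simp add: Fi_def J_def)
          show "Fi x * indicator {\<phi> (M m) .. \<phi> (1 / M m)} x \<le> indicator {lo<..<hi} x * F x"
            unfolding fx using Fi_nn[of x] by (auto split: split_indicator)
        qed
      qed
    qed
  qed
  also have "\<dots> = (SUP m. \<integral>\<^sup>+ x. ennreal (Fi x * indicator {\<phi> (M m) .. \<phi> (1 / M m)} x) \<partial>lborel)"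
  proof (rule nn_integral_monotone_convergence_SUP)
    show "incseq (\<lambda>m x. ennreal (Fi x * indicator {\<phi> (M m) .. \<phi> (1 / M m)} x))"
    proof (intro incseq_SucI le_funI ennreal_leI mult_left_mono Fi_nn)
      fix m x
      have "\<phi> (M (Suc m)) \<le> \<phi> (M m)" using anti[OF Mpos(1)[of m] Mmono(1)[of m "Suc m"]] by simp
      moreover have "\<phi> (1 / M m) \<le> \<phi> (1 / M (Suc m))" using anti[OF Mi(1)[of "Suc m"] Mmono(2)[of m "Suc m"]] by simp
      ultimately have "\<phi> (M (Suc m)) \<le> \<phi> (M m)" "\<phi> (1 / M m) \<le> \<phi> (1 / M (Suc m))" by auto
      then show "indicator {\<phi> (M m) .. \<phi> (1 / M m)} x \<le> (indicator {\<phi> (M (Suc m)) .. \<phi> (1 / M (Suc m))} x :: real)"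
        by (auto split: split_indicator)
    qed
  qed measurable
  also have "\<dots> = (SUP m. \<integral>\<^sup>+v. ennreal (Fi (\<phi> v) * - D v * indicator {1 / M m .. M m} v) \<partial>lborel)"
    using step by simp
  also have "\<dots> = (\<integral>\<^sup>+ v. (SUP m. ennreal (Fi (\<phi> v) * - D v * indicator {1 / M m .. M m} v)) \<partial>lborel)"
  proof (rule nn_integral_monotone_convergence_SUP[symmetric])
    show "incseq (\<lambda>m v. ennreal (Fi (\<phi> v) * - D v * indicator {1 / M m .. M m} v))"
    proof (intro incseq_SucI le_funI ennreal_leI)
      fix m v
      show "Fi (\<phi> v) * - D v * indicator {1 / M m .. M m} v \<le> Fi (\<phi> v) * - D v * indicator {1 / M (Suc m) .. M (Suc m)} v"
      proof (cases "v \<in> {1 / M m .. M m}")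
        case True
        then have "v > 0" using Mi(1)[of m] by (simp only: atLeastAtMost_iff) linarith
        then have "Fi (\<phi> v) * - D v \<ge> 0" using Fi_nn[of "\<phi> v"] Dnp[of v] by (intro mult_nonneg_nonneg) auto
        moreover have "v \<in> {1 / M (Suc m) .. M (Suc m)}" using True Mmono[of m "Suc m"] by auto
        ultimately show ?thesis using True by simp
      next
        case False
        show ?thesis
        proof (cases "v \<in> {1 / M (Suc m) .. M (Suc m)}")
          case True
          then have "v > 0" using Mi(1)[of "Suc m"] by (simp only: atLeastAtMost_iff) linarith
          then have "Fi (\<phi> v) * - D v \<ge> 0" using Fi_nn[of "\<phi> v"] Dnp[of v] by (intro mult_nonneg_nonneg) auto
          then show ?thesis using True False by simp
        qed (use False in simp)
      qed
    qed
  qed measurable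
  also have "\<dots> = (\<integral>\<^sup>+ v. ennreal (indicator {0<..} v * (F (\<phi> v) * - D v)) \<partial>lborel)"
  proof (intro nn_integral_cong)
    fix v
    show "(SUP m. ennreal (Fi (\<phi> v) * - D v * indicator {1 / M m .. M m} v)) = ennreal (indicator {0<..} v * (F (\<phi> v) * - D v))"
    proof (cases "v > 0")
      case False
      then have "v \<notin> {1 / M m .. M m}" for m using Mi(1)[of m] by (simp only: atLeastAtMost_iff) linarith
      then show ?thesis using False by simp
    next
      case True
      have "\<phi> v \<in> J" using img True unfolding J_def by blast
      then have Fv: "Fi (\<phi> v) = F (\<phi> v)" unfolding Fi_def by simp
      obtain m where m: "max v (1 / v) \<le> real m" using real_arch_simple by blast
      have Mv: "M m \<ge> v" using m unfolding M_def by simp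
      have "1 / v \<le> M m" using m unfolding M_def by simp
      then have Mv2: "1 / M m \<le> v" using True Mpos[of m] by (simp add: field_simps)
      from Mv Mv2 have 1: "ennreal (Fi (\<phi> v) * - D v * indicator {1 / M m .. M m} v) = ennreal (indicator {0<..} v * (F (\<phi> v) * - D v))"
        using True Fv by simp
      show ?thesis
      proof (rule antisym)
        show "(SUP m. ennreal (Fi (\<phi> v) * - D v * indicator {1 / M m .. M m} v)) \<le> ennreal (indicator {0<..} v * (F (\<phi> v) * - D v))"
        proof (intro SUP_least ennreal_leI)
          fix m
          have nn: "0 \<le> Fi (\<phi> v) * - D v" using Fi_nn[of "\<phi> v"] Dnp[of v] True by (intro mult_nonneg_nonneg) auto
          show "Fi (\<phi> v) * - D v * indicator {1 / M m .. M m} v \<le> indicator {0<..} v * (F (\<phi> v) * - D v)"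
            using nn True Fv by (cases "v \<in> {1 / M m .. M m}") auto
        qed
        show "ennreal (indicator {0<..} v * (F (\<phi> v) * - D v)) \<le> (SUP m. ennreal (Fi (\<phi> v) * - D v * indicator {1 / M m .. M m} v))"
        proof -
          have "ennreal (indicator {0<..} v * (F (\<phi> v) * - D v)) = ennreal (Fi (\<phi> v) * - D v * indicator {1 / M m .. M m} v)"
            using 1 by simp
          also have "\<dots> \<le> (SUP m. ennreal (Fi (\<phi> v) * - D v * indicator {1 / M m .. M m} v))"
            by (rule SUP_upper) simp
          finally show ?thesis .
        qed
      qed
    qed
  qed
  finally show ?thesis .
qed


definition Tk :: "nat \<Rightarrow> (nat \<Rightarrow> nat) \<Rightarrow> (nat \<Rightarrow> real) \<Rightarrow> real \<Rightarrow> real" where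
  "Tk K n0 s0 v = (\<Sum>k=1..K. (real (n0 k) / s0 k) / (real (n0 k) / s0 k + 1 / v))"
definition Td :: "nat \<Rightarrow> (nat \<Rightarrow> nat) \<Rightarrow> (nat \<Rightarrow> real) \<Rightarrow> real \<Rightarrow> real" where
  "Td K n0 s0 v = (\<Sum>k=1..K. (real (n0 k) / s0 k) / (v\<^sup>2 * (real (n0 k) / s0 k + 1 / v)\<^sup>2))"
definition DK :: "nat \<Rightarrow> (nat \<Rightarrow> nat) \<Rightarrow> (nat \<Rightarrow> real) \<Rightarrow> real \<Rightarrow> real" where
  "DK K n0 s0 v = - (Td K n0 s0 v * inverse ((1 + Tk K n0 s0 v) ^ Suc (Suc 0)))"

lemma fK_T: "fK K n0 s0 v = inverse (1 + Tk K n0 s0 v)" by (simp add: fK_def Tk_def)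

lemma meas_fK[measurable]: "fK K n0 s0 \<in> borel_measurable borel"
  unfolding fK_def by measurable
lemma meas_DK[measurable]: "DK K n0 s0 \<in> borel_measurable borel"
  unfolding DK_def Td_def Tk_def by measurable

lemma tb_gen: "(a::real) > 0 \<Longrightarrow> v > 0 \<Longrightarrow> 0 < a / (a + 1 / v) \<and> a / (a + 1 / v) < 1"
proof -
  assume a: "a > 0" and v: "v > 0"
  have d: "a < a + 1 / v" using v by simp
  have p: "0 < a + 1 / v" using a d by linarith
  have "0 < a / (a + 1 / v)" using a p by (rule divide_pos_pos)
  moreover have "a / (a + 1 / v) < 1" using p d by (simp add: divide_less_eq_1)
  ultimately show ?thesis by simp
qed

lemma ub_gen: "(a::real) > 0 \<Longrightarrow> v > 0 \<Longrightarrow> a / (a + 1 / v) \<le> a * v"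
proof -
  assume a: "a > 0" and v: "v > 0"
  have p: "0 < a + 1 / v" using a v by (simp add: add_pos_pos)
  have "a / (a + 1 / v) \<le> a / (1 / v)"
    by (rule divide_left_mono) (use a v p in \<open>auto intro!: mult_pos_pos\<close>)
  then show ?thesis by simp
qed

lemma lb_gen: "(a::real) > 0 \<Longrightarrow> v > 0 \<Longrightarrow> 1 - 1 / a * (1 / v) \<le> a / (a + 1 / v)"
proof -
  assume a: "a > 0" and v: "v > 0"
  have p: "0 < a + 1 / v" using a v by (simp add: add_pos_pos)
  have "a / (a + 1 / v) + (1 / v) / (a + 1 / v) = (a + 1 / v) / (a + 1 / v)" by (rule add_divide_distrib[symmetric])
  also have "\<dots> = 1" using p by simp
  finally have e: "a / (a + 1 / v) = 1 - (1 / v) / (a + 1 / v)" by linarith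
  have "(1 / v) / (a + 1 / v) \<le> (1 / v) / a"
    by (rule divide_left_mono) (use a v p in \<open>auto intro!: mult_pos_pos\<close>)
  then show ?thesis unfolding e by (simp add: mult.commute)
qed

lemma nn_gen: "(a::real) \<ge> 0 \<Longrightarrow> 0 \<le> a / (v\<^sup>2 * (a + 1 / v)\<^sup>2)"
  by simp

lemma deriv_gen:
  fixes a v :: real assumes a: "a > 0" and v: "v > 0"
  shows "((\<lambda>x. a / (a + 1 / x)) has_real_derivative a / (v\<^sup>2 * (a + 1 / v)\<^sup>2)) (at v)"
proof -
  have ne: "a + 1 / v \<noteq> 0" using a v by (smt (verit) divide_pos_pos)
  have "((\<lambda>x. a / (a + 1 / x)) has_real_derivative - (a * (- (inverse (v * v)))) / ((a + 1 / v) * (a + 1 / v))) (at v)"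
    using v ne by (auto intro!: derivative_eq_intros simp: inverse_eq_divide)
  moreover have "- (a * (- (inverse (v * v)))) / ((a + 1 / v) * (a + 1 / v)) = a / (v\<^sup>2 * (a + 1 / v)\<^sup>2)"
    by (simp add: power2_eq_square inverse_eq_divide)
  ultimately show ?thesis by simp
qed

context
  fixes K :: nat and n0 :: "nat \<Rightarrow> nat" and s0 :: "nat \<Rightarrow> real"
  assumes K1: "K \<ge> 1" and n0p: "\<And>k. k \<in> {1..K} \<Longrightarrow> n0 k \<ge> 1"
    and s0p: "\<And>k. k \<in> {1..K} \<Longrightarrow> s0 k > 0"
begin

lemma a_pos: "k \<in> {1..K} \<Longrightarrow> 0 < real (n0 k) / s0 k"
  using n0p[of k] s0p[of k] by simp

lemma term_bounds:
  assumes "v > 0" "k \<in> {1..K}"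
  shows "0 < (real (n0 k) / s0 k) / (real (n0 k) / s0 k + 1 / v)"
    "(real (n0 k) / s0 k) / (real (n0 k) / s0 k + 1 / v) < 1"
  using tb_gen[OF a_pos[OF assms(2)] assms(1)] by auto

lemma Tk_pos: "v > 0 \<Longrightarrow> 0 < Tk K n0 s0 v"
  unfolding Tk_def
proof (intro sum_pos)
  fix k assume "v > 0" "k \<in> {1..K}"
  then show "0 < (real (n0 k) / s0 k) / (real (n0 k) / s0 k + 1 / v)" by (rule term_bounds)
qed (use K1 in auto)

lemma Tk_ltK: "v > 0 \<Longrightarrow> Tk K n0 s0 v < real K"
proof -
  assume v: "v > 0"
  have "Tk K n0 s0 v < (\<Sum>k=1..K. 1)"
    unfolding Tk_def
  proof (intro sum_strict_mono)
    fix k assume "k \<in> {1..K}"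
    then show "(real (n0 k) / s0 k) / (real (n0 k) / s0 k + 1 / v) < 1" by (rule term_bounds[OF v])
  qed (use K1 in auto)
  then show ?thesis by simp
qed

lemma Tk_strict: "0 < v \<Longrightarrow> v < w \<Longrightarrow> Tk K n0 s0 v < Tk K n0 s0 w"
  unfolding Tk_def
proof (intro sum_strict_mono)
  fix k assume v: "0 < v" "v < w" and k: "k \<in> {1..K}"
  have a: "0 < real (n0 k) / s0 k" by (rule a_pos[OF k])
  have "1 / w < 1 / v" using v by (simp add: frac_less2)
  then show "real (n0 k) / s0 k / (real (n0 k) / s0 k + 1 / v) < real (n0 k) / s0 k / (real (n0 k) / s0 k + 1 / w)"
    using a v by (intro divide_strict_left_mono) (auto intro!: mult_pos_pos add_pos_pos)
qed (use K1 in auto)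

lemma fK_strict: "0 < v \<Longrightarrow> v < w \<Longrightarrow> fK K n0 s0 w < fK K n0 s0 v"
  unfolding fK_T using Tk_strict[of v w] Tk_pos[of v] by (simp add: inverse_less_iff_less)

lemma fK_anti: "0 < v \<Longrightarrow> v \<le> w \<Longrightarrow> fK K n0 s0 w \<le> fK K n0 s0 v"
  using fK_strict[of v w] by (cases "v = w") auto

lemma fK_in: "v > 0 \<Longrightarrow> fK K n0 s0 v \<in> {1 / (real K + 1)<..<1}"
  using Tk_pos[of v] Tk_ltK[of v] unfolding fK_T
  by (auto simp: inverse_eq_divide field_simps)

lemma fK_inj: "inj_on (fK K n0 s0) {0<..}"
proof (rule inj_onI)
  fix v w assume "v \<in> {0<..}" "w \<in> {0<..}" "fK K n0 s0 v = fK K n0 s0 w"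
  then show "v = w" using fK_strict[of v w] fK_strict[of w v] by (cases v w rule: linorder_cases) auto
qed

lemma Tk_deriv: "v > 0 \<Longrightarrow> (Tk K n0 s0 has_real_derivative Td K n0 s0 v) (at v)"
  unfolding Tk_def[abs_def] Td_def
proof (rule DERIV_sum)
  fix k assume v: "v > 0" and k: "k \<in> {1..K}"
  define a where "a = real (n0 k) / s0 k"
  have a: "a > 0" unfolding a_def by (rule a_pos[OF k])
  have ne: "a + 1 / v \<noteq> 0" using a v by (smt (verit) divide_pos_pos)
  show "((\<lambda>x. a / (a + 1 / x)) has_real_derivative a / (v\<^sup>2 * (a + 1 / v)\<^sup>2)) (at v)"
    by (rule deriv_gen[OF a v])
qed

lemma Td_nn: "v > 0 \<Longrightarrow> Td K n0 s0 v \<ge> 0"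
  unfolding Td_def
proof (intro sum_nonneg)
  fix k assume "k \<in> {1..K}"
  then show "0 \<le> (real (n0 k) / s0 k) / (v\<^sup>2 * (real (n0 k) / s0 k + 1 / v)\<^sup>2)"
    by (intro nn_gen less_imp_le a_pos)
qed

lemma fK_deriv: "v > 0 \<Longrightarrow> (fK K n0 s0 has_real_derivative DK K n0 s0 v) (at v)"
proof -
  assume v: "v > 0"
  have "((\<lambda>x. 1 + Tk K n0 s0 x) has_real_derivative Td K n0 s0 v) (at v)"
    using Tk_deriv[OF v] by (auto intro!: derivative_eq_intros)
  from DERIV_inverse_fun[OF this] Tk_pos[OF v]
  show ?thesis unfolding fK_T[abs_def] DK_def by simp
qed

lemma DK_np: "v > 0 \<Longrightarrow> DK K n0 s0 v \<le> 0"
  unfolding DK_def using Td_nn[of v] Tk_pos[of v] by simp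

lemma deriv_fK: "v > 0 \<Longrightarrow> deriv (fK K n0 s0) v = DK K n0 s0 v"
  using fK_deriv DERIV_imp_deriv by blast

lemma DK_cont: "continuous_on {0<..} (DK K n0 s0)"
proof -
  have ne: "real (n0 k) / s0 k + 1 / v \<noteq> 0" if "k \<in> {1..K}" "v \<in> {0<..}" for k v
    using a_pos[OF that(1)] that(2) by (smt (verit) divide_pos_pos greaterThan_iff)
  have ne2: "(1 + Tk K n0 s0 v) ^ Suc (Suc 0) \<noteq> 0" if "v \<in> {0<..}" for v
    using Tk_pos[of v] that by simp
  show ?thesis unfolding DK_def Td_def Tk_def[abs_def]
    apply (intro continuous_intros)
    using ne ne2 unfolding Tk_def by auto
qed

lemma Tk_cont: "v > 0 \<Longrightarrow> isCont (Tk K n0 s0) v"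
  using Tk_deriv DERIV_isCont by blast

lemma fK_surj: "fK K n0 s0 ` {0<..} = {1 / (real K + 1)<..<1}"
proof
  show "fK K n0 s0 ` {0<..} \<subseteq> {1 / (real K + 1)<..<1}" using fK_in by auto
  show "{1 / (real K + 1)<..<1} \<subseteq> fK K n0 s0 ` {0<..}"
  proof
    fix a0 assume a0: "a0 \<in> {1 / (real K + 1)<..<1}"
    define \<tau> where "\<tau> = 1 / a0 - 1"
    have "0 < 1 / (real K + 1)" by simp
    then have a0p: "a0 > 0" using a0 by (simp only: greaterThanLessThan_iff) linarith
    have \<tau>: "0 < \<tau>" "\<tau> < real K" using a0 a0p unfolding \<tau>_def by (auto simp: field_simps)
    define Sa where "Sa = (\<Sum>k=1..K. real (n0 k) / s0 k)"
    define Si where "Si = (\<Sum>k=1..K. 1 / (real (n0 k) / s0 k))"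
    have Sa: "Sa > 0" unfolding Sa_def using K1 a_pos by (intro sum_pos) auto
    have Si: "Si > 0" unfolding Si_def
    proof (intro sum_pos)
      fix k assume "k \<in> {1..K}"
      then show "0 < 1 / (real (n0 k) / s0 k)" by (simp only: zero_less_divide_1_iff) (rule a_pos)
    qed (use K1 in auto)
    define v1 where "v1 = \<tau> / Sa"
    define v2 where "v2 = max v1 (Si / (real K - \<tau>))"
    have v1: "v1 > 0" unfolding v1_def using \<tau> Sa by simp
    have v2: "v2 \<ge> v1" "v2 \<ge> Si / (real K - \<tau>)" unfolding v2_def by auto
    have v2p: "v2 > 0" using v1 v2 by simp
    have "Tk K n0 s0 v1 \<le> (\<Sum>k=1..K. real (n0 k) / s0 k * v1)"
      unfolding Tk_def
    proof (intro sum_mono)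
      fix k assume k: "k \<in> {1..K}"
      have a: "0 < real (n0 k) / s0 k" by (rule a_pos[OF k])
      show "real (n0 k) / s0 k / (real (n0 k) / s0 k + 1 / v1) \<le> real (n0 k) / s0 k * v1"
        by (rule ub_gen[OF a v1])
    qed
    also have "\<dots> = \<tau>" unfolding sum_distrib_right[symmetric] Sa_def[symmetric] v1_def using Sa by simp
    finally have T1: "Tk K n0 s0 v1 \<le> \<tau>" .
    have "(\<Sum>k=1..K. 1 - 1 / (real (n0 k) / s0 k) * (1 / v2)) \<le> Tk K n0 s0 v2"
      unfolding Tk_def
    proof (intro sum_mono)
      fix k assume k: "k \<in> {1..K}"
      have a: "0 < real (n0 k) / s0 k" by (rule a_pos[OF k])
      show "1 - 1 / (real (n0 k) / s0 k) * (1 / v2) \<le> real (n0 k) / s0 k / (real (n0 k) / s0 k + 1 / v2)"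
        by (rule lb_gen[OF a v2p])
    qed
    moreover have "(\<Sum>k=1..K. 1 - 1 / (real (n0 k) / s0 k) * (1 / v2)) = real K - Si / v2"
      unfolding sum_subtractf sum_distrib_right[symmetric] Si_def by simp
    moreover have "Si / v2 \<le> real K - \<tau>"
      using v2(2) \<tau> v2p Si by (simp add: field_simps)
    ultimately have T2: "\<tau> \<le> Tk K n0 s0 v2" by linarith
    obtain v where v: "v1 \<le> v" "v \<le> v2" "Tk K n0 s0 v = \<tau>"
      using IVT[of "Tk K n0 s0" v1 \<tau> v2] T1 T2 v2 v1 Tk_cont by auto
    have "v > 0" using v v1 by simp
    moreover have "fK K n0 s0 v = a0" unfolding fK_T v \<tau>_def using a0p by simp
    ultimately show "a0 \<in> fK K n0 s0 ` {0<..}" by force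
  qed
qed

end


lemma sumsq:
  fixes x :: "nat \<Rightarrow> real" assumes n: "m \<ge> 1"
  shows "(\<Sum>i=1..m. (x i - \<theta>)\<^sup>2) = real m * (mean m x - \<theta>)\<^sup>2 + ((\<Sum>i=1..m. (x i)\<^sup>2) - real m * (mean m x)\<^sup>2)"
proof -
  have sx: "(\<Sum>i=1..m. x i) = real m * mean m x" using n unfolding mean_def by simp
  have "(\<Sum>i=1..m. (x i - \<theta>)\<^sup>2) = (\<Sum>i=1..m. (x i)\<^sup>2 - 2 * \<theta> * x i + \<theta>\<^sup>2)"
    by (intro sum.cong) (auto simp: power2_eq_square algebra_simps)
  also have "\<dots> = (\<Sum>i=1..m. (x i)\<^sup>2) - 2 * \<theta> * (\<Sum>i=1..m. x i) + real m * \<theta>\<^sup>2"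
    by (simp add: sum.distrib sum_subtractf sum_distrib_left)
  also have "\<dots> = real m * (mean m x - \<theta>)\<^sup>2 + ((\<Sum>i=1..m. (x i)\<^sup>2) - real m * (mean m x)\<^sup>2)"
    unfolding sx by (simp add: power2_eq_square algebra_simps)
  finally show ?thesis .
qed

lemma Lk_powr:
  assumes n: "n0 k \<ge> 1" and s: "s0 k > 0"
  shows "Lk n0 s0 y0 k \<theta> powr h =
    ((sqrt (s0 k) powr (- real (n0 k))) powr h *
      exp (- h * ((\<Sum>i=1..n0 k. (y0 k i)\<^sup>2) - real (n0 k) * (mean (n0 k) (y0 k))\<^sup>2) / (2 * s0 k)))
    * exp (- (h * (real (n0 k) / s0 k)) * (mean (n0 k) (y0 k) - \<theta>)\<^sup>2 / 2)"
proof -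
  have "Lk n0 s0 y0 k \<theta> powr h = (sqrt (s0 k) powr (- real (n0 k))) powr h *
      exp (- (1 / (2 * s0 k)) * (\<Sum>i=1..n0 k. (y0 k i - \<theta>)\<^sup>2) * h)"
    unfolding Lk_def powr_mult exp_powr_real by simp
  also have "- (1 / (2 * s0 k)) * (\<Sum>i=1..n0 k. (y0 k i - \<theta>)\<^sup>2) * h
     = - h * ((\<Sum>i=1..n0 k. (y0 k i)\<^sup>2) - real (n0 k) * (mean (n0 k) (y0 k))\<^sup>2) / (2 * s0 k)
       + (- (h * (real (n0 k) / s0 k)) * (mean (n0 k) (y0 k) - \<theta>)\<^sup>2 / 2)"
    unfolding sumsq[OF n] using s by (simp add: field_simps)
  finally show ?thesis by (simp only: exp_add mult.assoc)
qed


definition PP :: "nat \<Rightarrow> (nat \<Rightarrow> nat) \<Rightarrow> (nat \<Rightarrow> real) \<Rightarrow> (nat \<Rightarrow> real) \<Rightarrow> real" where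
  "PP K n0 s0 h = (\<Sum>k=1..K. h k * (real (n0 k) / s0 k))"
definition BB :: "nat \<Rightarrow> (nat \<Rightarrow> nat) \<Rightarrow> (nat \<Rightarrow> real) \<Rightarrow> (nat \<Rightarrow> nat \<Rightarrow> real) \<Rightarrow> (nat \<Rightarrow> real) \<Rightarrow> real" where
  "BB K n0 s0 y0 h = (\<Sum>k=1..K. h k * (real (n0 k) / s0 k) * mean (n0 k) (y0 k))"
definition WW :: "nat \<Rightarrow> (nat \<Rightarrow> nat) \<Rightarrow> (nat \<Rightarrow> real) \<Rightarrow> (nat \<Rightarrow> nat \<Rightarrow> real) \<Rightarrow> (nat \<Rightarrow> real) \<Rightarrow> real" where
  "WW K n0 s0 y0 h = (\<Prod>k=1..K. (sqrt (s0 k) powr (- real (n0 k))) powr h k *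
      exp (- h k * ((\<Sum>i=1..n0 k. (y0 k i)\<^sup>2) - real (n0 k) * (mean (n0 k) (y0 k))\<^sup>2) / (2 * s0 k)))
    * exp (- (\<Sum>k=1..K. h k * (real (n0 k) / s0 k) * (mean (n0 k) (y0 k))\<^sup>2) / 2)"

lemma quad_gen: fixes c m \<theta> :: real
  shows "- c * (m - \<theta>)\<^sup>2 / 2 = - (c * m\<^sup>2) / 2 + (- c * \<theta>\<^sup>2 / 2 + c * m * \<theta>)"
  by (simp add: power2_eq_square field_simps)

lemma sum_quad: fixes c m :: "nat \<Rightarrow> real"
  shows "(\<Sum>k\<in>A. - (c k * (m k)\<^sup>2) / 2 + (- c k * \<theta>\<^sup>2 / 2 + c k * m k * \<theta>))
    = - (\<Sum>k\<in>A. c k * (m k)\<^sup>2) / 2 + (- (\<Sum>k\<in>A. c k) * \<theta>\<^sup>2 / 2 + (\<Sum>k\<in>A. c k * m k) * \<theta>)"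
proof -
  have 1: "(\<Sum>k\<in>A. - (c k * (m k)\<^sup>2) / 2) = - (\<Sum>k\<in>A. c k * (m k)\<^sup>2) / 2"
    by (simp add: sum_negf sum_divide_distrib)
  have 2: "(\<Sum>k\<in>A. - c k * \<theta>\<^sup>2 / 2) = - (\<Sum>k\<in>A. c k) * \<theta>\<^sup>2 / 2"
    by (simp add: sum_negf sum_divide_distrib sum_distrib_right)
  have 3: "(\<Sum>k\<in>A. c k * m k * \<theta>) = (\<Sum>k\<in>A. c k * m k) * \<theta>"
    by (simp add: sum_distrib_right)
  show ?thesis unfolding sum.distrib 1 2 3 ..
qed

context
  fixes K :: nat and n0 :: "nat \<Rightarrow> nat" and s0 :: "nat \<Rightarrow> real"
  assumes K1: "K \<ge> 1" and n0p: "\<And>k. k \<in> {1..K} \<Longrightarrow> n0 k \<ge> 1"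
    and s0p: "\<And>k. k \<in> {1..K} \<Longrightarrow> s0 k > 0"
begin

lemma WW_pos: "WW K n0 s0 y0 h > 0"
proof -
  have ne: "s0 k \<noteq> 0" if "k \<in> {1..K}" for k using s0p[OF that] by simp
  show ?thesis unfolding WW_def using ne by (intro mult_pos_pos prod_pos) auto
qed

lemma prodL:
  "(\<Prod>k=1..K. Lk n0 s0 y0 k \<theta> powr h k) =
     WW K n0 s0 y0 h * exp (- PP K n0 s0 h * \<theta>\<^sup>2 / 2 + BB K n0 s0 y0 h * \<theta>)"
proof -
  define w where "w k = (sqrt (s0 k) powr (- real (n0 k))) powr h k *
      exp (- h k * ((\<Sum>i=1..n0 k. (y0 k i)\<^sup>2) - real (n0 k) * (mean (n0 k) (y0 k))\<^sup>2) / (2 * s0 k))" for k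
  define e where "e k = - (h k * (real (n0 k) / s0 k)) * (mean (n0 k) (y0 k) - \<theta>)\<^sup>2 / 2" for k
  have "(\<Prod>k=1..K. Lk n0 s0 y0 k \<theta> powr h k) = (\<Prod>k=1..K. w k * exp (e k))"
  proof (intro prod.cong refl)
    fix k assume k: "k \<in> {1..K}"
    show "Lk n0 s0 y0 k \<theta> powr h k = w k * exp (e k)"
      unfolding w_def e_def by (rule Lk_powr[of n0 k s0 y0 \<theta> "h k", OF n0p[OF k] s0p[OF k]])
  qed
  also have "\<dots> = (\<Prod>k=1..K. w k) * exp (\<Sum>k=1..K. e k)"
    by (simp add: prod.distrib exp_sum)
  also have "(\<Sum>k=1..K. e k) = (\<Sum>k=1..K. - (h k * (real (n0 k) / s0 k) * (mean (n0 k) (y0 k))\<^sup>2) / 2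
        + (- (h k * (real (n0 k) / s0 k)) * \<theta>\<^sup>2 / 2 + h k * (real (n0 k) / s0 k) * mean (n0 k) (y0 k) * \<theta>))"
    unfolding e_def by (intro sum.cong refl quad_gen)
  also have "\<dots> = - (\<Sum>k=1..K. h k * (real (n0 k) / s0 k) * (mean (n0 k) (y0 k))\<^sup>2) / 2
       + (- PP K n0 s0 h * \<theta>\<^sup>2 / 2 + BB K n0 s0 y0 h * \<theta>)"
    unfolding PP_def BB_def by (rule sum_quad)
  finally show ?thesis unfolding WW_def w_def exp_add by (simp only: mult_ac)
qed

lemma ratio_gen:
  assumes P: "PP K n0 s0 h > 0"
  shows "(\<Prod>k=1..K. Lk n0 s0 y0 k \<theta> powr h k) / (\<integral>t. (\<Prod>k=1..K. Lk n0 s0 y0 k t powr h k) \<partial>lborel)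
     = 1 / sqrt (2 * pi / PP K n0 s0 h) *
       exp (- PP K n0 s0 h * \<theta>\<^sup>2 / 2 + BB K n0 s0 y0 h * \<theta> - (BB K n0 s0 y0 h)\<^sup>2 / (2 * PP K n0 s0 h))"
proof -
  let ?P = "PP K n0 s0 h" and ?B = "BB K n0 s0 y0 h" and ?W = "WW K n0 s0 y0 h"
  have "has_bochner_integral lborel (\<lambda>t. ?W * exp (- ?P * t\<^sup>2 / 2 + ?B * t)) (?W * (sqrt (2 * pi / ?P) * exp (?B\<^sup>2 / (2 * ?P))))"
    by (rule has_bochner_integral_mult_right[OF gauss_bochner[OF P]])
  then have I: "(\<integral>t. (\<Prod>k=1..K. Lk n0 s0 y0 k t powr h k) \<partial>lborel) = ?W * (sqrt (2 * pi / ?P) * exp (?B\<^sup>2 / (2 * ?P)))"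
    unfolding prodL by (rule has_bochner_integral_integral_eq)
  have W: "?W > 0" by (rule WW_pos)
  have c: "sqrt (2 * pi / ?P) > 0" using P by simp
  have "(\<Prod>k=1..K. Lk n0 s0 y0 k \<theta> powr h k) / (\<integral>t. (\<Prod>k=1..K. Lk n0 s0 y0 k t powr h k) \<partial>lborel)
     = ?W * exp (- ?P * \<theta>\<^sup>2 / 2 + ?B * \<theta>) / (?W * (sqrt (2 * pi / ?P) * exp (?B\<^sup>2 / (2 * ?P))))"
    by (subst I, subst prodL, rule refl)
  also have "\<dots> = 1 / sqrt (2 * pi / ?P) * (exp (- ?P * \<theta>\<^sup>2 / 2 + ?B * \<theta>) / exp (?B\<^sup>2 / (2 * ?P)))"
    using W c by (simp add: field_simps)
  finally show ?thesis by (simp add: exp_diff)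
qed

end


definition Sv :: "nat \<Rightarrow> (nat \<Rightarrow> nat) \<Rightarrow> (nat \<Rightarrow> real) \<Rightarrow> (nat \<Rightarrow> nat \<Rightarrow> real) \<Rightarrow> real \<Rightarrow> real" where
  "Sv K n0 s0 y0 v = (\<Sum>k=1..K. Nk n0 s0 v k * Yk n0 s0 y0 k)"
definition GG :: "nat \<Rightarrow> (nat \<Rightarrow> nat) \<Rightarrow> (nat \<Rightarrow> real) \<Rightarrow> (nat \<Rightarrow> nat \<Rightarrow> real) \<Rightarrow> real \<Rightarrow> real \<Rightarrow> real" where
  "GG K n0 s0 y0 \<theta> v = exp (- (fK K n0 s0 v * Cc K n0 s0 v) * \<theta>\<^sup>2 / 2 + \<theta> * (fK K n0 s0 v * Sv K n0 s0 y0 v / v))"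

definition psi :: "nat \<Rightarrow> (nat \<Rightarrow> nat) \<Rightarrow> (nat \<Rightarrow> real) \<Rightarrow> real \<Rightarrow> real" where
  "psi K n0 s0 = inv_into {0<..} (fK K n0 s0)"

lemma GG_pos: "GG K n0 s0 y0 \<theta> v > 0" unfolding GG_def by simp

lemma meas_GG[measurable]: "(\<lambda>(\<theta>, v). GG K n0 s0 y0 \<theta> v) \<in> borel_measurable (borel \<Otimes>\<^sub>M borel)"
  unfolding GG_def Sv_def fK_def Cc_def Nk_def Yk_def by measurable
lemma meas_GG2[measurable]: "GG K n0 s0 y0 \<theta> \<in> borel_measurable borel"
  unfolding GG_def Sv_def fK_def Cc_def Nk_def Yk_def by measurable
lemma meas_Qf[measurable]: "Qf K n0 s0 y0 \<in> borel_measurable borel"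
  unfolding Qf_def fK_def Cc_def Nk_def Yk_def by measurable
lemma meas_Rf[measurable]: "Rf K n0 s0 y0 \<in> borel_measurable borel"
  unfolding Rf_def Aa_def Nk_def Yk_def by measurable


lemma gen1: fixes a v a0 :: real assumes a: "a > 0" and v: "v > 0"
  shows "inverse (1 + a * v) * a0 * a = a0 * (a * inverse (a + 1 / v) / v)"
proof -
  have p: "1 + a * v > 0" using a v by (simp add: add_pos_pos)
  have e: "inverse (a + 1 / v) = v / (1 + a * v)" using v p by (simp add: field_simps)
  have q: "v + a * (v * v) > 0" using a v by (simp add: add_pos_pos)
  show ?thesis unfolding e using v p q by (simp add: field_simps)
qed

lemma gen2: fixes a v a0 m :: real assumes a: "a > 0" and v: "v > 0"
  shows "inverse (1 + a * v) * a0 * a * m = a0 * (inverse (a + 1 / v) * (a * m)) / v"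
proof -
  have p: "1 + a * v > 0" using a v by (simp add: add_pos_pos)
  have e: "inverse (a + 1 / v) = v / (1 + a * v)" using v p by (simp add: field_simps)
  have q: "v + a * (v * v) > 0" using a v by (simp add: add_pos_pos)
  show ?thesis unfolding e using v p q by (simp add: field_simps)
qed

context
  fixes K :: nat and n0 :: "nat \<Rightarrow> nat" and s0 :: "nat \<Rightarrow> real"
  assumes K1: "K \<ge> 1" and n0p: "\<And>k. k \<in> {1..K} \<Longrightarrow> n0 k \<ge> 1"
    and s0p: "\<And>k. k \<in> {1..K} \<Longrightarrow> s0 k > 0"
begin

lemma psi_pos: "a0 \<in> {1 / (real K + 1)<..<1} \<Longrightarrow> psi K n0 s0 a0 > 0"
  unfolding psi_def using inv_into_into[of a0 "fK K n0 s0" "{0<..}"] fK_surj[of K n0 s0, OF K1 n0p s0p] by auto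

lemma psi_f: "a0 \<in> {1 / (real K + 1)<..<1} \<Longrightarrow> fK K n0 s0 (psi K n0 s0 a0) = a0"
  unfolding psi_def using f_inv_into_f[of a0 "fK K n0 s0" "{0<..}"] fK_surj[of K n0 s0, OF K1 n0p s0p] by auto

lemma f_psi: "v > 0 \<Longrightarrow> psi K n0 s0 (fK K n0 s0 v) = v"
  unfolding psi_def using inv_into_f_f[OF fK_inj[of K n0 s0, OF K1 n0p s0p], of v] by auto

lemma psi_meas: "psi K n0 s0 \<in> borel_measurable (restrict_space borel {1 / (real K + 1)<..<1})"
proof -
  have "mono_on {1 / (real K + 1)<..<1} (\<lambda>a. - psi K n0 s0 a)"
  proof (rule mono_onI)
    fix a b assume a: "a \<in> {1 / (real K + 1)<..<1}" and b: "b \<in> {1 / (real K + 1)<..<1}" and ab: "a \<le> b"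
    show "- psi K n0 s0 a \<le> - psi K n0 s0 b"
    proof (rule ccontr)
      assume "\<not> ?thesis"
      then have "psi K n0 s0 a < psi K n0 s0 b" by simp
      from fK_strict[of K n0 s0, OF K1 n0p s0p psi_pos[OF a] this] psi_f[OF a] psi_f[OF b]
      have "b < a" by simp
      with ab show False by simp
    qed
  qed
  from borel_measurable_mono_on_fnc[OF this]
  have "(\<lambda>a. - (- psi K n0 s0 a)) \<in> borel_measurable (restrict_space borel {1 / (real K + 1)<..<1})"
    by measurable
  then show ?thesis by simp
qed

lemma hk_eq: "a0 \<in> {1 / (real K + 1)<..<1} \<Longrightarrow>
  hk K n0 s0 k a0 = inverse (1 + real (n0 k) * psi K n0 s0 a0 / s0 k) * a0"
  unfolding hk_def psi_def by simp

lemma hk_bounds: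
  assumes a0: "a0 \<in> {1 / (real K + 1)<..<1}" and k: "k \<in> {1..K}"
  shows "0 < hk K n0 s0 k a0 \<and> hk K n0 s0 k a0 < 1"
proof -
  have v: "psi K n0 s0 a0 > 0" by (rule psi_pos[OF a0])
  have "0 < 1 / (real K + 1)" by simp
  then have a0p: "0 < a0" "a0 < 1" using a0 by (simp_all only: greaterThanLessThan_iff) linarith+
  have x: "0 < real (n0 k) * psi K n0 s0 a0 / s0 k" using n0p[OF k] s0p[OF k] v by simp
  have i: "0 < inverse (1 + real (n0 k) * psi K n0 s0 a0 / s0 k)" "inverse (1 + real (n0 k) * psi K n0 s0 a0 / s0 k) < 1"
    using x by (auto simp: inverse_less_1_iff)
  show ?thesis unfolding hk_eq[OF a0] using mult_strict_mono[OF i(2) a0p(2)] i(1) a0p(1) by auto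
qed

lemma Nk_pos: "v > 0 \<Longrightarrow> k \<in> {1..K} \<Longrightarrow> Nk n0 s0 v k > 0"
  unfolding Nk_def using a_pos[of K n0 s0, OF K1 n0p s0p, of k] by (simp add: add_pos_pos)

lemma Cc_T: "v > 0 \<Longrightarrow> Cc K n0 s0 v = Tk K n0 s0 v / v"
  unfolding Cc_def Tk_def sum_divide_distrib
proof (intro sum.cong refl)
  fix k assume v: "v > 0" and k: "k \<in> {1..K}"
  have a: "real (n0 k) / s0 k > 0" by (rule a_pos[of K n0 s0, OF K1 n0p s0p k])
  have ne: "real (n0 k) / s0 k + 1 / v \<noteq> 0" using a v by (smt (verit) divide_pos_pos)
  show "real (n0 k) * Nk n0 s0 v k / (v * s0 k) = real (n0 k) / s0 k / (real (n0 k) / s0 k + 1 / v) / v"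
    unfolding Nk_def using ne by (simp add: divide_inverse mult_ac)
qed

lemma Aa_T: "v > 0 \<Longrightarrow> Aa K n0 s0 v = (1 + Tk K n0 s0 v) / v"
proof -
  assume v: "v > 0"
  have "(\<Sum>k=1..K. Nk n0 s0 v k) / v\<^sup>2 = (\<Sum>k=1..K. (1 - (real (n0 k) / s0 k) / (real (n0 k) / s0 k + 1 / v)) / v)"
    unfolding sum_divide_distrib
  proof (intro sum.cong refl)
    fix k assume k: "k \<in> {1..K}"
    have a: "real (n0 k) / s0 k > 0" by (rule a_pos[of K n0 s0, OF K1 n0p s0p k])
    define a' where "a' = real (n0 k) / s0 k"
    have p: "a' + 1 / v > 0" using a v unfolding a'_def by (simp add: add_pos_pos)
    have "(a' + 1 / v) / (a' + 1 / v) = a' / (a' + 1 / v) + (1 / v) / (a' + 1 / v)" by (rule add_divide_distrib)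
    then have e: "1 - a' / (a' + 1 / v) = (1 / v) / (a' + 1 / v)" using p by simp
    show "Nk n0 s0 v k / v\<^sup>2 = (1 - real (n0 k) / s0 k / (real (n0 k) / s0 k + 1 / v)) / v"
      unfolding a'_def[symmetric] e Nk_def by (simp add: divide_inverse power2_eq_square mult_ac inverse_mult_distrib)
  qed
  also have "\<dots> = (real K - Tk K n0 s0 v) / v"
    unfolding sum_divide_distrib[symmetric] sum_subtractf Tk_def by simp
  finally have X: "(\<Sum>k=1..K. Nk n0 s0 v k) / v\<^sup>2 = (real K - Tk K n0 s0 v) / v" .
  have "(1 + real K) / v - (real K - Tk K n0 s0 v) / v = ((1 + real K) - (real K - Tk K n0 s0 v)) / v"
    by (rule diff_divide_distrib[symmetric])
  also have "\<dots> = (1 + Tk K n0 s0 v) / v" by simp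
  finally show ?thesis unfolding Aa_def X .
qed

lemma PP_hk: "a0 \<in> {1 / (real K + 1)<..<1} \<Longrightarrow>
   PP K n0 s0 (\<lambda>k. hk K n0 s0 k a0) = a0 * Cc K n0 s0 (psi K n0 s0 a0)"
  unfolding PP_def Cc_def sum_distrib_left
proof (intro sum.cong refl)
  fix k assume a0: "a0 \<in> {1 / (real K + 1)<..<1}" and k: "k \<in> {1..K}"
  define v where "v = psi K n0 s0 a0"
  have v: "v > 0" unfolding v_def by (rule psi_pos[OF a0])
  have s: "s0 k > 0" "real (n0 k) > 0" using s0p[OF k] n0p[OF k] by auto
  show "hk K n0 s0 k a0 * (real (n0 k) / s0 k) = a0 * (real (n0 k) * Nk n0 s0 (psi K n0 s0 a0) k / (psi K n0 s0 a0 * s0 k))"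
    unfolding hk_eq[OF a0] v_def[symmetric]
  proof -
    define a where "a = real (n0 k) / s0 k"
    have a: "a > 0" unfolding a_def using s by simp
    have e1: "real (n0 k) * v / s0 k = a * v" unfolding a_def by simp
    have e2: "real (n0 k) * Nk n0 s0 v k / (v * s0 k) = a * inverse (a + 1 / v) / v"
      unfolding a_def Nk_def by simp
    show "inverse (1 + real (n0 k) * v / s0 k) * a0 * (real (n0 k) / s0 k) = a0 * (real (n0 k) * Nk n0 s0 v k / (v * s0 k))"
      unfolding e1 e2 a_def[symmetric] by (rule gen1[OF a v])
  qed
qed

lemma BB_hk: "a0 \<in> {1 / (real K + 1)<..<1} \<Longrightarrow>
   BB K n0 s0 y0 (\<lambda>k. hk K n0 s0 k a0) = a0 * Sv K n0 s0 y0 (psi K n0 s0 a0) / psi K n0 s0 a0"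
  unfolding BB_def Sv_def sum_distrib_left sum_divide_distrib
proof (intro sum.cong refl)
  fix k assume a0: "a0 \<in> {1 / (real K + 1)<..<1}" and k: "k \<in> {1..K}"
  define v where "v = psi K n0 s0 a0"
  have v: "v > 0" unfolding v_def by (rule psi_pos[OF a0])
  have s: "s0 k > 0" "real (n0 k) > 0" using s0p[OF k] n0p[OF k] by auto
  show "hk K n0 s0 k a0 * (real (n0 k) / s0 k) * mean (n0 k) (y0 k) = a0 * (Nk n0 s0 (psi K n0 s0 a0) k * Yk n0 s0 y0 k) / psi K n0 s0 a0"
    unfolding hk_eq[OF a0] v_def[symmetric]
  proof -
    define a where "a = real (n0 k) / s0 k"
    have a: "a > 0" unfolding a_def using s by simp
    have e1: "real (n0 k) * v / s0 k = a * v" unfolding a_def by simp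
    have e2: "Nk n0 s0 v k * Yk n0 s0 y0 k = inverse (a + 1 / v) * (a * mean (n0 k) (y0 k))"
      unfolding a_def Nk_def Yk_def by simp
    show "inverse (1 + real (n0 k) * v / s0 k) * a0 * (real (n0 k) / s0 k) * mean (n0 k) (y0 k) = a0 * (Nk n0 s0 v k * Yk n0 s0 y0 k) / v"
      unfolding e1 e2 a_def[symmetric] by (rule gen2[OF a v])
  qed
qed

lemma Cc_pos: "v > 0 \<Longrightarrow> Cc K n0 s0 v > 0"
  using Cc_T[of v] Tk_pos[of K n0 s0, OF K1 n0p s0p, of v] by simp

lemma bnpp_point:
  assumes a0: "a0 \<in> {1 / (real K + 1)<..<1}"
  shows "(\<Prod>k=1..K. Lk n0 s0 y0 k \<theta> powr hk K n0 s0 k a0) / cnorm K n0 s0 y0 a0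
     = Qf K n0 s0 y0 (psi K n0 s0 a0) / sqrt (2 * pi) * GG K n0 s0 y0 \<theta> (psi K n0 s0 a0)"
proof -
  define v where "v = psi K n0 s0 a0"
  have v: "v > 0" unfolding v_def by (rule psi_pos[OF a0])
  have f: "fK K n0 s0 v = a0" unfolding v_def by (rule psi_f[OF a0])
  have a0p: "a0 > 0" using a0 by (simp only: greaterThanLessThan_iff) (smt (verit) divide_pos_pos of_nat_0_le_iff)
  define C where "C = Cc K n0 s0 v"
  define S where "S = Sv K n0 s0 y0 v"
  have C: "C > 0" unfolding C_def by (rule Cc_pos[OF v])
  have P: "PP K n0 s0 (\<lambda>k. hk K n0 s0 k a0) > 0" unfolding PP_hk[OF a0] using a0p Cc_pos[OF psi_pos[OF a0]] by simp
  have "(\<Prod>k=1..K. Lk n0 s0 y0 k \<theta> powr hk K n0 s0 k a0) / cnorm K n0 s0 y0 a0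
     = 1 / sqrt (2 * pi / (a0 * C)) * exp (- (a0 * C) * \<theta>\<^sup>2 / 2 + (a0 * S / v) * \<theta> - (a0 * S / v)\<^sup>2 / (2 * (a0 * C)))"
    using ratio_gen[of K n0 s0, OF K1 n0p s0p P, of y0 \<theta>] unfolding cnorm_def PP_hk[OF a0] BB_hk[OF a0] v_def[symmetric] C_def S_def .
  also have "\<dots> = Qf K n0 s0 y0 v / sqrt (2 * pi) * GG K n0 s0 y0 \<theta> v"
  proof -
    have e: "- (a0 * C) * \<theta>\<^sup>2 / 2 + (a0 * S / v) * \<theta> - (a0 * S / v)\<^sup>2 / (2 * (a0 * C))
       = - (a0 / (2 * C)) * ((1 / v) * S)\<^sup>2 + (- (a0 * C) * \<theta>\<^sup>2 / 2 + \<theta> * (a0 * S / v))"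
      using C a0p v by (simp add: power2_eq_square field_simps)
    have s: "1 / sqrt (2 * pi / (a0 * C)) = sqrt (a0 * C) / sqrt (2 * pi)"
      using C a0p by (simp add: real_sqrt_divide)
    show ?thesis unfolding e s Qf_def GG_def f exp_add by (simp add: C_def S_def Sv_def)
  qed
  finally show ?thesis unfolding v_def .
qed

end


lemma gauss_nn2:
  fixes p b c :: real assumes p: "p > 0"
  shows "(\<integral>\<^sup>+t. ennreal (exp (- p * t\<^sup>2 / 2 + b * t + c)) \<partial>lborel) = ennreal (sqrt (2 * pi / p) * exp (b\<^sup>2 / (2 * p) + c))"
proof -
  have "(\<integral>\<^sup>+t. ennreal (exp (- p * t\<^sup>2 / 2 + b * t + c)) \<partial>lborel) = (\<integral>\<^sup>+t. ennreal (exp c) * ennreal (exp (- p * t\<^sup>2 / 2 + b * t)) \<partial>lborel)"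
    by (intro nn_integral_cong) (simp add: exp_add ennreal_mult[symmetric] mult.commute)
  also have "\<dots> = ennreal (exp c) * (\<integral>\<^sup>+t. ennreal (exp (- p * t\<^sup>2 / 2 + b * t)) \<partial>lborel)"
    by (rule nn_integral_cmult) measurable
  also have "\<dots> = ennreal (sqrt (2 * pi / p) * exp (b\<^sup>2 / (2 * p) + c))"
    unfolding gauss_nn[OF p] by (simp add: exp_add ennreal_mult'[symmetric] mult_ac)
  finally show ?thesis .
qed

lemma quad2:
  fixes n s m t v \<mu> :: real assumes s: "s \<noteq> 0" and v: "v \<noteq> 0"
  shows "- (1 / 2) * (n * (m - t)\<^sup>2 / s) - (1 / (2 * v)) * (t - \<mu>)\<^sup>2
    = - (n / s + 1 / v) * t\<^sup>2 / 2 + (n / s * m + \<mu> / v) * t + (- (n / s * m\<^sup>2) / 2 - \<mu>\<^sup>2 / (2 * v))"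
  using s v by (simp add: power2_eq_square field_simps)

lemma split_sum2:
  fixes X Y :: "nat \<Rightarrow> real"
  shows "A0 - a * (\<Sum>k\<in>I. X k) - C0 - b * (\<Sum>k\<in>I. Y k) = (A0 - C0) + (\<Sum>k\<in>I. - a * X k - b * Y k)"
proof -
  have "(\<Sum>k\<in>I. - a * X k - b * Y k) = - a * (\<Sum>k\<in>I. X k) - b * (\<Sum>k\<in>I. Y k)"
    unfolding sum_subtractf sum_distrib_left ..
  then show ?thesis by simp
qed

context
  fixes K :: nat and n0 :: "nat \<Rightarrow> nat" and s0 :: "nat \<Rightarrow> real"
  assumes K1: "K \<ge> 1" and n0p: "\<And>k. k \<in> {1..K} \<Longrightarrow> n0 k \<ge> 1"
    and s0p: "\<And>k. k \<in> {1..K} \<Longrightarrow> s0 k > 0"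
begin

lemma pi_step:
  fixes c0 v \<mu> \<theta> s :: real and n :: nat and y :: "nat \<Rightarrow> real" and y0 :: "nat \<Rightarrow> nat \<Rightarrow> real"
  assumes c0: "c0 \<ge> 0" and v: "v > 0"
  shows "(\<integral>\<^sup>+ \<theta>0. ennreal (c0 *
           exp (- real n * (mean n y - \<theta>)\<^sup>2 / (2 * s)
                - (1 / 2) * (\<Sum>k=1..K. real (n0 k) * (mean (n0 k) (y0 k) - \<theta>0 k)\<^sup>2 / s0 k)
                - (\<theta> - \<mu>)\<^sup>2 / (2 * v)
                - (1 / (2 * v)) * (\<Sum>k=1..K. (\<theta>0 k - \<mu>)\<^sup>2)))
       \<partial>(PiM {1..K} (\<lambda>_. lborel)))
     = ennreal (c0 * exp (- real n * (mean n y - \<theta>)\<^sup>2 / (2 * s) - (\<theta> - \<mu>)\<^sup>2 / (2 * v)) *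
         (\<Prod>k=1..K. sqrt (2 * pi / (real (n0 k) / s0 k + 1 / v)) *
            exp ((real (n0 k) / s0 k * mean (n0 k) (y0 k) + \<mu> / v)\<^sup>2 / (2 * (real (n0 k) / s0 k + 1 / v))
                 + (- (real (n0 k) / s0 k * (mean (n0 k) (y0 k))\<^sup>2) / 2 - \<mu>\<^sup>2 / (2 * v)))))"
proof -
  define E1 where "E1 = - real n * (mean n y - \<theta>)\<^sup>2 / (2 * s) - (\<theta> - \<mu>)\<^sup>2 / (2 * v)"
  define Ek where "Ek k t = - (1 / 2) * (real (n0 k) * (mean (n0 k) (y0 k) - t)\<^sup>2 / s0 k) - (1 / (2 * v)) * (t - \<mu>)\<^sup>2" for k t
  define p where "p k = real (n0 k) / s0 k + 1 / v" for k
  define b where "b k = real (n0 k) / s0 k * mean (n0 k) (y0 k) + \<mu> / v" for k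
  define c where "c k = - (real (n0 k) / s0 k * (mean (n0 k) (y0 k))\<^sup>2) / 2 - \<mu>\<^sup>2 / (2 * v)" for k
  have pp: "p k > 0" if "k \<in> {1..K}" for k
    unfolding p_def using a_pos[of K n0 s0, OF K1 n0p s0p that] v by (simp add: add_pos_pos)
  have Ek_q: "Ek k t = - p k * t\<^sup>2 / 2 + b k * t + c k" if "k \<in> {1..K}" for k t
    unfolding Ek_def p_def b_def c_def
    by (rule quad2) (use s0p[OF that] v in auto)
  have pt: "ennreal (c0 *
           exp (- real n * (mean n y - \<theta>)\<^sup>2 / (2 * s)
                - (1 / 2) * (\<Sum>k=1..K. real (n0 k) * (mean (n0 k) (y0 k) - \<theta>0 k)\<^sup>2 / s0 k)
                - (\<theta> - \<mu>)\<^sup>2 / (2 * v)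
                - (1 / (2 * v)) * (\<Sum>k=1..K. (\<theta>0 k - \<mu>)\<^sup>2)))
     = ennreal (c0 * exp E1) * (\<Prod>k=1..K. ennreal (exp (Ek k (\<theta>0 k))))" for \<theta>0
  proof -
    have "exp (- real n * (mean n y - \<theta>)\<^sup>2 / (2 * s)
                - (1 / 2) * (\<Sum>k=1..K. real (n0 k) * (mean (n0 k) (y0 k) - \<theta>0 k)\<^sup>2 / s0 k)
                - (\<theta> - \<mu>)\<^sup>2 / (2 * v)
                - (1 / (2 * v)) * (\<Sum>k=1..K. (\<theta>0 k - \<mu>)\<^sup>2)) = exp (E1 + (\<Sum>k=1..K. Ek k (\<theta>0 k)))"
      unfolding split_sum2 E1_def Ek_def ..
    also have "\<dots> = exp E1 * (\<Prod>k=1..K. exp (Ek k (\<theta>0 k)))" by (simp add: exp_add exp_sum)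
    finally show ?thesis using c0
      by (simp add: ennreal_mult' prod_ennreal mult.assoc)
  qed
  interpret product_sigma_finite "\<lambda>_. lborel :: real measure" by standard
  have "(\<integral>\<^sup>+ \<theta>0. ennreal (c0 *
           exp (- real n * (mean n y - \<theta>)\<^sup>2 / (2 * s)
                - (1 / 2) * (\<Sum>k=1..K. real (n0 k) * (mean (n0 k) (y0 k) - \<theta>0 k)\<^sup>2 / s0 k)
                - (\<theta> - \<mu>)\<^sup>2 / (2 * v)
                - (1 / (2 * v)) * (\<Sum>k=1..K. (\<theta>0 k - \<mu>)\<^sup>2)))
       \<partial>(PiM {1..K} (\<lambda>_. lborel)))
     = (\<integral>\<^sup>+ \<theta>0. ennreal (c0 * exp E1) * (\<Prod>k=1..K. ennreal (exp (Ek k (\<theta>0 k)))) \<partial>(PiM {1..K} (\<lambda>_. lborel)))"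
    unfolding pt ..
  also have "\<dots> = ennreal (c0 * exp E1) * (\<integral>\<^sup>+ \<theta>0. (\<Prod>k=1..K. ennreal (exp (Ek k (\<theta>0 k)))) \<partial>(PiM {1..K} (\<lambda>_. lborel)))"
  proof (rule nn_integral_cmult)
    show "(\<lambda>\<theta>0. \<Prod>k = 1..K. ennreal (exp (Ek k (\<theta>0 k)))) \<in> borel_measurable (Pi\<^sub>M {1..K} (\<lambda>_. lborel))"
      by (intro borel_measurable_prod_ennreal measurable_comp[OF measurable_component_singleton, unfolded comp_def])
         (auto simp: Ek_def)
  qed
  also have "(\<integral>\<^sup>+ \<theta>0. (\<Prod>k=1..K. ennreal (exp (Ek k (\<theta>0 k)))) \<partial>(PiM {1..K} (\<lambda>_. lborel)))
      = (\<Prod>k=1..K. \<integral>\<^sup>+ t. ennreal (exp (Ek k t)) \<partial>lborel)"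
    by (rule product_nn_integral_prod) (auto simp: Ek_def)
  also have "\<dots> = (\<Prod>k=1..K. ennreal (sqrt (2 * pi / p k) * exp ((b k)\<^sup>2 / (2 * p k) + c k)))"
  proof (intro prod.cong refl)
    fix k assume k: "k \<in> {1..K}"
    show "(\<integral>\<^sup>+ t. ennreal (exp (Ek k t)) \<partial>lborel) = ennreal (sqrt (2 * pi / p k) * exp ((b k)\<^sup>2 / (2 * p k) + c k))"
      unfolding Ek_q[OF k] by (rule gauss_nn2[OF pp[OF k]])
  qed
  also have "\<dots> = ennreal (\<Prod>k=1..K. sqrt (2 * pi / p k) * exp ((b k)\<^sup>2 / (2 * p k) + c k))"
  proof (rule prod_ennreal)
    fix k assume "k \<in> {1..K}"
    then have "p k > 0" by (rule pp)
    then show "0 \<le> sqrt (2 * pi / p k) * exp ((b k)\<^sup>2 / (2 * p k) + c k)" by simp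
  qed
  finally have fin: "(\<integral>\<^sup>+ \<theta>0. ennreal (c0 *
           exp (- real n * (mean n y - \<theta>)\<^sup>2 / (2 * s)
                - (1 / 2) * (\<Sum>k=1..K. real (n0 k) * (mean (n0 k) (y0 k) - \<theta>0 k)\<^sup>2 / s0 k)
                - (\<theta> - \<mu>)\<^sup>2 / (2 * v)
                - (1 / (2 * v)) * (\<Sum>k=1..K. (\<theta>0 k - \<mu>)\<^sup>2)))
       \<partial>(PiM {1..K} (\<lambda>_. lborel))) = ennreal (c0 * exp E1) * ennreal (\<Prod>k=1..K. sqrt (2 * pi / p k) * exp ((b k)\<^sup>2 / (2 * p k) + c k))" .
  have "ennreal (c0 * exp E1) * ennreal (\<Prod>k=1..K. sqrt (2 * pi / p k) * exp ((b k)\<^sup>2 / (2 * p k) + c k))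
     = ennreal (c0 * exp E1 * (\<Prod>k=1..K. sqrt (2 * pi / p k) * exp ((b k)\<^sup>2 / (2 * p k) + c k)))"
    using c0 by (simp add: ennreal_mult')
  from fin this have "(\<integral>\<^sup>+ \<theta>0. ennreal (c0 *
           exp (- real n * (mean n y - \<theta>)\<^sup>2 / (2 * s)
                - (1 / 2) * (\<Sum>k=1..K. real (n0 k) * (mean (n0 k) (y0 k) - \<theta>0 k)\<^sup>2 / s0 k)
                - (\<theta> - \<mu>)\<^sup>2 / (2 * v)
                - (1 / (2 * v)) * (\<Sum>k=1..K. (\<theta>0 k - \<mu>)\<^sup>2)))
       \<partial>(PiM {1..K} (\<lambda>_. lborel))) = ennreal (c0 * exp E1 * (\<Prod>k=1..K. sqrt (2 * pi / p k) * exp ((b k)\<^sup>2 / (2 * p k) + c k)))"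
    by (rule trans)
  then show ?thesis unfolding E1_def p_def b_def c_def .
qed

end


definition PN :: "nat \<Rightarrow> (nat \<Rightarrow> nat) \<Rightarrow> (nat \<Rightarrow> real) \<Rightarrow> real \<Rightarrow> real" where
  "PN K n0 s0 v = (\<Prod>k=1..K. sqrt (Nk n0 s0 v k))"
definition US :: "nat \<Rightarrow> (nat \<Rightarrow> nat) \<Rightarrow> (nat \<Rightarrow> real) \<Rightarrow> (nat \<Rightarrow> nat \<Rightarrow> real) \<Rightarrow> real \<Rightarrow> real" where
  "US K n0 s0 y0 v = (\<Sum>k=1..K. (Yk n0 s0 y0 k)\<^sup>2 * Nk n0 s0 v k)"
definition ZS :: "nat \<Rightarrow> (nat \<Rightarrow> nat) \<Rightarrow> (nat \<Rightarrow> real) \<Rightarrow> (nat \<Rightarrow> nat \<Rightarrow> real) \<Rightarrow> real" where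
  "ZS K n0 s0 y0 = (\<Sum>k=1..K. real (n0 k) / s0 k * (mean (n0 k) (y0 k))\<^sup>2)"

lemma perk:
  fixes Y \<mu> v p Z :: real assumes p: "p \<noteq> 0" and v: "v \<noteq> 0"
  shows "(Y + \<mu> / v)\<^sup>2 / (2 * p) + (- Z / 2 - \<mu>\<^sup>2 / (2 * v))
    = (1 / 2) * (Y\<^sup>2 * inverse p) + (\<mu> / v) * (inverse p * Y) + (\<mu>\<^sup>2 / (2 * v\<^sup>2)) * inverse p + (- (Z / 2) - \<mu>\<^sup>2 / (2 * v))"
  using p v by (simp add: power2_eq_square field_simps)

lemma sum4:
  fixes U W N Z :: "nat \<Rightarrow> real"
  shows "(\<Sum>k\<in>I. (1 / 2) * U k + r1 * W k + r2 * N k + (- (Z k / 2) - q))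
     = (1 / 2) * (\<Sum>k\<in>I. U k) + r1 * (\<Sum>k\<in>I. W k) + r2 * (\<Sum>k\<in>I. N k) - (\<Sum>k\<in>I. Z k) / 2 - real (card I) * q"
proof -
  have "(\<Sum>k\<in>I. (1 / 2) * U k + r1 * W k + r2 * N k + (- (Z k / 2) - q))
      = (\<Sum>k\<in>I. (1 / 2) * U k) + (\<Sum>k\<in>I. r1 * W k) + (\<Sum>k\<in>I. r2 * N k) + ((\<Sum>k\<in>I. - (Z k / 2)) - (\<Sum>k\<in>I. q))"
    unfolding sum.distrib sum_subtractf ..
  also have "\<dots> = (1 / 2) * (\<Sum>k\<in>I. U k) + r1 * (\<Sum>k\<in>I. W k) + r2 * (\<Sum>k\<in>I. N k) - (\<Sum>k\<in>I. Z k) / 2 - real (card I) * q"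
    unfolding sum_distrib_left[symmetric] sum_negf sum_divide_distrib[symmetric] by simp
  finally show ?thesis .
qed

lemma mu_quad:
  fixes X0 \<theta> \<mu> v U S SN ZS k :: real assumes v: "v \<noteq> 0"
  shows "X0 - (\<theta> - \<mu>)\<^sup>2 / (2 * v) + ((1 / 2) * U + (\<mu> / v) * S + (\<mu>\<^sup>2 / (2 * v\<^sup>2)) * SN - ZS / 2 - k * (\<mu>\<^sup>2 / (2 * v)))
    = - ((1 + k) / v - SN / v\<^sup>2) * \<mu>\<^sup>2 / 2 + (\<theta> / v + S / v) * \<mu> + (X0 - \<theta>\<^sup>2 / (2 * v) + (1 / 2) * U - ZS / 2)"
  using v by (simp add: power2_eq_square field_simps)

lemma cmult_gauss:
  fixes c A B c2 :: real assumes c: "c \<ge> 0" and A: "A > 0"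
  shows "(\<integral>\<^sup>+\<mu>. ennreal (c * exp (- A * \<mu>\<^sup>2 / 2 + B * \<mu> + c2)) \<partial>lborel) = ennreal (c * (sqrt (2 * pi / A) * exp (B\<^sup>2 / (2 * A) + c2)))"
proof -
  have "(\<integral>\<^sup>+\<mu>. ennreal (c * exp (- A * \<mu>\<^sup>2 / 2 + B * \<mu> + c2)) \<partial>lborel) = (\<integral>\<^sup>+\<mu>. ennreal c * ennreal (exp (- A * \<mu>\<^sup>2 / 2 + B * \<mu> + c2)) \<partial>lborel)"
    using c by (simp add: ennreal_mult')
  also have "\<dots> = ennreal c * (\<integral>\<^sup>+\<mu>. ennreal (exp (- A * \<mu>\<^sup>2 / 2 + B * \<mu> + c2)) \<partial>lborel)"
    by (rule nn_integral_cmult) measurable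
  also have "\<dots> = ennreal (c * (sqrt (2 * pi / A) * exp (B\<^sup>2 / (2 * A) + c2)))"
    unfolding gauss_nn2[OF A] using c by (simp add: ennreal_mult')
  finally show ?thesis .
qed

context
  fixes K :: nat and n0 :: "nat \<Rightarrow> nat" and s0 :: "nat \<Rightarrow> real"
  assumes K1: "K \<ge> 1" and n0p: "\<And>k. k \<in> {1..K} \<Longrightarrow> n0 k \<ge> 1"
    and s0p: "\<And>k. k \<in> {1..K} \<Longrightarrow> s0 k > 0"
begin

lemma inner_mu:
  fixes c0 v \<mu> \<theta> s :: real and n :: nat and y :: "nat \<Rightarrow> real" and y0 :: "nat \<Rightarrow> nat \<Rightarrow> real"
  assumes c0: "c0 \<ge> 0" and v: "v > 0"
  shows "(\<integral>\<^sup>+ \<theta>0. ennreal (c0 *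
           exp (- real n * (mean n y - \<theta>)\<^sup>2 / (2 * s)
                - (1 / 2) * (\<Sum>k=1..K. real (n0 k) * (mean (n0 k) (y0 k) - \<theta>0 k)\<^sup>2 / s0 k)
                - (\<theta> - \<mu>)\<^sup>2 / (2 * v)
                - (1 / (2 * v)) * (\<Sum>k=1..K. (\<theta>0 k - \<mu>)\<^sup>2)))
       \<partial>(PiM {1..K} (\<lambda>_. lborel)))
     = ennreal (c0 * (sqrt (2 * pi) ^ K * PN K n0 s0 v) *
         exp (- Aa K n0 s0 v * \<mu>\<^sup>2 / 2 + (\<theta> / v + Sv K n0 s0 y0 v / v) * \<mu>
              + (- real n * (mean n y - \<theta>)\<^sup>2 / (2 * s) - \<theta>\<^sup>2 / (2 * v) + (1 / 2) * US K n0 s0 y0 v - ZS K n0 s0 y0 / 2)))"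
proof -
  define p where "p k = real (n0 k) / s0 k + 1 / v" for k
  define q where "q k = (real (n0 k) / s0 k * mean (n0 k) (y0 k) + \<mu> / v)\<^sup>2 / (2 * (real (n0 k) / s0 k + 1 / v))
                 + (- (real (n0 k) / s0 k * (mean (n0 k) (y0 k))\<^sup>2) / 2 - \<mu>\<^sup>2 / (2 * v))" for k
  have pp: "p k > 0" if "k \<in> {1..K}" for k
    unfolding p_def using a_pos[of K n0 s0, OF K1 n0p s0p that] v by (simp add: add_pos_pos)
  have Np: "Nk n0 s0 v k = inverse (p k)" for k unfolding Nk_def p_def ..
  have prod1: "(\<Prod>k=1..K. sqrt (2 * pi / p k)) = sqrt (2 * pi) ^ K * PN K n0 s0 v"
  proof -
    have "(\<Prod>k=1..K. sqrt (2 * pi / p k)) = (\<Prod>k=1..K. sqrt (2 * pi) * sqrt (Nk n0 s0 v k))"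
      unfolding Np by (intro prod.cong refl) (simp add: real_sqrt_mult divide_inverse)
    also have "\<dots> = sqrt (2 * pi) ^ K * PN K n0 s0 v"
      unfolding prod.distrib PN_def by simp
    finally show ?thesis .
  qed
  have sumq: "(\<Sum>k=1..K. q k) = (1 / 2) * US K n0 s0 y0 v + (\<mu> / v) * Sv K n0 s0 y0 v + (\<mu>\<^sup>2 / (2 * v\<^sup>2)) * (\<Sum>k=1..K. Nk n0 s0 v k) - ZS K n0 s0 y0 / 2 - real K * (\<mu>\<^sup>2 / (2 * v))"
  proof -
    have "(\<Sum>k=1..K. q k) = (\<Sum>k=1..K. (1 / 2) * ((Yk n0 s0 y0 k)\<^sup>2 * Nk n0 s0 v k) + (\<mu> / v) * (Nk n0 s0 v k * Yk n0 s0 y0 k)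
        + (\<mu>\<^sup>2 / (2 * v\<^sup>2)) * Nk n0 s0 v k + (- ((real (n0 k) / s0 k * (mean (n0 k) (y0 k))\<^sup>2) / 2) - \<mu>\<^sup>2 / (2 * v)))"
    proof (intro sum.cong refl)
      fix k assume k: "k \<in> {1..K}"
      have Y: "real (n0 k) / s0 k * mean (n0 k) (y0 k) = Yk n0 s0 y0 k" unfolding Yk_def by simp
      have pk: "p k \<noteq> 0" using pp[OF k] by simp
      have vne: "v \<noteq> 0" using v by simp
      from perk[where Y="Yk n0 s0 y0 k" and \<mu>=\<mu> and v=v and p="p k" and Z="real (n0 k) / s0 k * (mean (n0 k) (y0 k))\<^sup>2", OF pk vne]
      show "q k = (1 / 2) * ((Yk n0 s0 y0 k)\<^sup>2 * Nk n0 s0 v k) + (\<mu> / v) * (Nk n0 s0 v k * Yk n0 s0 y0 k)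
        + (\<mu>\<^sup>2 / (2 * v\<^sup>2)) * Nk n0 s0 v k + (- ((real (n0 k) / s0 k * (mean (n0 k) (y0 k))\<^sup>2) / 2) - \<mu>\<^sup>2 / (2 * v))"
        unfolding q_def Y Np p_def[symmetric] by simp
    qed
    also have "\<dots> = (1 / 2) * US K n0 s0 y0 v + (\<mu> / v) * Sv K n0 s0 y0 v + (\<mu>\<^sup>2 / (2 * v\<^sup>2)) * (\<Sum>k=1..K. Nk n0 s0 v k) - ZS K n0 s0 y0 / 2 - real K * (\<mu>\<^sup>2 / (2 * v))"
      unfolding sum4 US_def Sv_def ZS_def by simp
    finally show ?thesis .
  qed
  have "(\<Prod>k=1..K. sqrt (2 * pi / (real (n0 k) / s0 k + 1 / v)) *
            exp ((real (n0 k) / s0 k * mean (n0 k) (y0 k) + \<mu> / v)\<^sup>2 / (2 * (real (n0 k) / s0 k + 1 / v))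
                 + (- (real (n0 k) / s0 k * (mean (n0 k) (y0 k))\<^sup>2) / 2 - \<mu>\<^sup>2 / (2 * v))))
     = (\<Prod>k=1..K. sqrt (2 * pi / p k)) * exp (\<Sum>k=1..K. q k)"
    by (simp add: prod.distrib exp_sum p_def q_def)
  also have "\<dots> = sqrt (2 * pi) ^ K * PN K n0 s0 v * exp (\<Sum>k=1..K. q k)" unfolding prod1 ..
  finally have P: "(\<Prod>k=1..K. sqrt (2 * pi / (real (n0 k) / s0 k + 1 / v)) *
            exp ((real (n0 k) / s0 k * mean (n0 k) (y0 k) + \<mu> / v)\<^sup>2 / (2 * (real (n0 k) / s0 k + 1 / v))
                 + (- (real (n0 k) / s0 k * (mean (n0 k) (y0 k))\<^sup>2) / 2 - \<mu>\<^sup>2 / (2 * v))))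
     = sqrt (2 * pi) ^ K * PN K n0 s0 v * exp (\<Sum>k=1..K. q k)" .
  have E: "- real n * (mean n y - \<theta>)\<^sup>2 / (2 * s) - (\<theta> - \<mu>)\<^sup>2 / (2 * v) + (\<Sum>k=1..K. q k)
     = - Aa K n0 s0 v * \<mu>\<^sup>2 / 2 + (\<theta> / v + Sv K n0 s0 y0 v / v) * \<mu>
              + (- real n * (mean n y - \<theta>)\<^sup>2 / (2 * s) - \<theta>\<^sup>2 / (2 * v) + (1 / 2) * US K n0 s0 y0 v - ZS K n0 s0 y0 / 2)"
    unfolding sumq Aa_def by (rule mu_quad) (use v in simp)
  have PS: "(\<integral>\<^sup>+ \<theta>0. ennreal (c0 *
           exp (- real n * (mean n y - \<theta>)\<^sup>2 / (2 * s)
                - (1 / 2) * (\<Sum>k=1..K. real (n0 k) * (mean (n0 k) (y0 k) - \<theta>0 k)\<^sup>2 / s0 k)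
                - (\<theta> - \<mu>)\<^sup>2 / (2 * v)
                - (1 / (2 * v)) * (\<Sum>k=1..K. (\<theta>0 k - \<mu>)\<^sup>2)))
       \<partial>(PiM {1..K} (\<lambda>_. lborel)))
     = ennreal (c0 * exp (- real n * (mean n y - \<theta>)\<^sup>2 / (2 * s) - (\<theta> - \<mu>)\<^sup>2 / (2 * v)) *
         (\<Prod>k=1..K. sqrt (2 * pi / (real (n0 k) / s0 k + 1 / v)) *
            exp ((real (n0 k) / s0 k * mean (n0 k) (y0 k) + \<mu> / v)\<^sup>2 / (2 * (real (n0 k) / s0 k + 1 / v))
                 + (- (real (n0 k) / s0 k * (mean (n0 k) (y0 k))\<^sup>2) / 2 - \<mu>\<^sup>2 / (2 * v)))))"
    by (rule pi_step[of K n0 s0, OF K1 n0p s0p c0 v])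
  have R: "c0 * exp (- real n * (mean n y - \<theta>)\<^sup>2 / (2 * s) - (\<theta> - \<mu>)\<^sup>2 / (2 * v)) *
         (\<Prod>k=1..K. sqrt (2 * pi / (real (n0 k) / s0 k + 1 / v)) *
            exp ((real (n0 k) / s0 k * mean (n0 k) (y0 k) + \<mu> / v)\<^sup>2 / (2 * (real (n0 k) / s0 k + 1 / v))
                 + (- (real (n0 k) / s0 k * (mean (n0 k) (y0 k))\<^sup>2) / 2 - \<mu>\<^sup>2 / (2 * v))))
     = c0 * (sqrt (2 * pi) ^ K * PN K n0 s0 v) *
         exp (- Aa K n0 s0 v * \<mu>\<^sup>2 / 2 + (\<theta> / v + Sv K n0 s0 y0 v / v) * \<mu>
              + (- real n * (mean n y - \<theta>)\<^sup>2 / (2 * s) - \<theta>\<^sup>2 / (2 * v) + (1 / 2) * US K n0 s0 y0 v - ZS K n0 s0 y0 / 2))"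
    unfolding P unfolding E[symmetric] exp_add by (simp only: mult_ac)
  show ?thesis unfolding PS R ..
qed

end


definition kap1 :: "nat \<Rightarrow> (nat \<Rightarrow> nat) \<Rightarrow> (nat \<Rightarrow> real) \<Rightarrow> (nat \<Rightarrow> nat \<Rightarrow> real) \<Rightarrow> real" where
  "kap1 K n0 s0 y0 = sqrt (2 * pi) ^ (K + 1) * exp (- ZS K n0 s0 y0 / 2)"

lemma kap1_pos: "kap1 K n0 s0 y0 > 0" unfolding kap1_def by simp

lemma expo:
  fixes v T \<theta> S :: real assumes v: "v > 0" and T: "T > 0"
  shows "(\<theta> / v + S / v)\<^sup>2 / (2 * ((1 + T) / v)) - \<theta>\<^sup>2 / (2 * v)
     = S\<^sup>2 / (2 * v\<^sup>2 * ((1 + T) / v)) + (- (inverse (1 + T) * (T / v)) * \<theta>\<^sup>2 / 2 + \<theta> * (inverse (1 + T) * S / v))"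
proof -
  have q: "1 + T > 0" using T by simp
  have *: "(\<theta> / v + S / v)\<^sup>2 / (2 * (q / v)) - \<theta>\<^sup>2 / (2 * v)
     = S\<^sup>2 / (2 * v\<^sup>2 * (q / v)) + (- (inverse q * ((q - 1) / v)) * \<theta>\<^sup>2 / 2 + \<theta> * (inverse q * S / v))"
    if "q > 0" for q :: real
    using that v by (simp add: power2_eq_square field_simps)
  show ?thesis using *[OF q] by simp
qed

context
  fixes K :: nat and n0 :: "nat \<Rightarrow> nat" and s0 :: "nat \<Rightarrow> real"
  assumes K1: "K \<ge> 1" and n0p: "\<And>k. k \<in> {1..K} \<Longrightarrow> n0 k \<ge> 1"
    and s0p: "\<And>k. k \<in> {1..K} \<Longrightarrow> s0 k > 0"
begin

lemma bhm_inner: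
  fixes v \<theta> s pv :: real and n :: nat and y :: "nat \<Rightarrow> real" and y0 :: "nat \<Rightarrow> nat \<Rightarrow> real"
  assumes pv: "pv \<ge> 0" and v: "v > 0"
  shows "(\<integral>\<^sup>+ \<mu>. (\<integral>\<^sup>+ \<theta>0.
         ennreal (pv * v powr (- (real K + 1) / 2) *
           exp (- real n * (mean n y - \<theta>)\<^sup>2 / (2 * s)
                - (1 / 2) * (\<Sum>k=1..K. real (n0 k) * (mean (n0 k) (y0 k) - \<theta>0 k)\<^sup>2 / s0 k)
                - (\<theta> - \<mu>)\<^sup>2 / (2 * v)
                - (1 / (2 * v)) * (\<Sum>k=1..K. (\<theta>0 k - \<mu>)\<^sup>2)))
       \<partial>(PiM {1..K} (\<lambda>_. lborel))) \<partial>lborel)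
   = ennreal (kap1 K n0 s0 y0 * (Rf K n0 s0 y0 v * pv * (exp (- real n * (mean n y - \<theta>)\<^sup>2 / (2 * s)) * GG K n0 s0 y0 \<theta> v)))"
proof -
  define c0 where "c0 = pv * v powr (- (real K + 1) / 2)"
  have c0: "c0 \<ge> 0" unfolding c0_def using pv by simp
  define T where "T = Tk K n0 s0 v"
  have T: "T > 0" unfolding T_def by (rule Tk_pos[of K n0 s0, OF K1 n0p s0p v])
  define A where "A = Aa K n0 s0 v"
  have A: "A = (1 + T) / v" unfolding A_def T_def by (rule Aa_T[of K n0 s0, OF K1 n0p s0p v])
  have Ap: "A > 0" unfolding A using T v by simp
  define S where "S = Sv K n0 s0 y0 v"
  define X0 where "X0 = - real n * (mean n y - \<theta>)\<^sup>2 / (2 * s)"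
  define U where "U = US K n0 s0 y0 v"
  define Z where "Z = ZS K n0 s0 y0"
  define PNv where "PNv = PN K n0 s0 v"
  have PNn: "PNv \<ge> 0" unfolding PNv_def PN_def
  proof (intro prod_nonneg)
    fix k assume k: "k \<in> {1..K}"
    show "0 \<le> sqrt (Nk n0 s0 v k)" using Nk_pos[of K n0 s0, OF K1 n0p s0p v k] by simp
  qed
  define c where "c = c0 * (sqrt (2 * pi) ^ K * PNv)"
  have c: "c \<ge> 0" unfolding c_def using c0 PNn by simp
  have "(\<integral>\<^sup>+ \<mu>. (\<integral>\<^sup>+ \<theta>0.
         ennreal (pv * v powr (- (real K + 1) / 2) *
           exp (- real n * (mean n y - \<theta>)\<^sup>2 / (2 * s)
                - (1 / 2) * (\<Sum>k=1..K. real (n0 k) * (mean (n0 k) (y0 k) - \<theta>0 k)\<^sup>2 / s0 k)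
                - (\<theta> - \<mu>)\<^sup>2 / (2 * v)
                - (1 / (2 * v)) * (\<Sum>k=1..K. (\<theta>0 k - \<mu>)\<^sup>2)))
       \<partial>(PiM {1..K} (\<lambda>_. lborel))) \<partial>lborel)
     = (\<integral>\<^sup>+ \<mu>. ennreal (c * exp (- A * \<mu>\<^sup>2 / 2 + (\<theta> / v + S / v) * \<mu> + (X0 - \<theta>\<^sup>2 / (2 * v) + (1 / 2) * U - Z / 2))) \<partial>lborel)"
    unfolding c0_def[symmetric] c_def A_def S_def X0_def U_def Z_def PNv_def
    by (intro nn_integral_cong) (rule inner_mu[of K n0 s0, OF K1 n0p s0p c0 v])
  also have "\<dots> = ennreal (c * (sqrt (2 * pi / A) * exp ((\<theta> / v + S / v)\<^sup>2 / (2 * A) + (X0 - \<theta>\<^sup>2 / (2 * v) + (1 / 2) * U - Z / 2))))"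
    by (rule cmult_gauss[OF c Ap])
  also have "c * (sqrt (2 * pi / A) * exp ((\<theta> / v + S / v)\<^sup>2 / (2 * A) + (X0 - \<theta>\<^sup>2 / (2 * v) + (1 / 2) * U - Z / 2)))
     = kap1 K n0 s0 y0 * (Rf K n0 s0 y0 v * pv * (exp X0 * GG K n0 s0 y0 \<theta> v))"
  proof -
    have S': "(\<Sum>k=1..K. Yk n0 s0 y0 k * Nk n0 s0 v k) = S" unfolding S_def Sv_def by (simp add: mult.commute)
    have Apow: "A powr (- 1 / 2) = inverse (sqrt A)"
    proof -
      have "A powr (- 1 / 2) = A powr (- (1 / 2))" by simp
      also have "\<dots> = inverse (A powr (1 / 2))" by (rule powr_minus)
      also have "\<dots> = inverse (sqrt A)" using Ap by (simp add: powr_half_sqrt)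
      finally show ?thesis .
    qed
    have Rf: "Rf K n0 s0 y0 v = v powr (- (real K + 1) / 2) * PNv * inverse (sqrt A) * exp (S\<^sup>2 / (2 * v\<^sup>2 * A)) * exp ((1 / 2) * U)"
      unfolding Rf_def PNv_def PN_def A_def[symmetric] S' Apow U_def US_def ..
    have GG: "GG K n0 s0 y0 \<theta> v = exp (- (inverse (1 + T) * (T / v)) * \<theta>\<^sup>2 / 2 + \<theta> * (inverse (1 + T) * S / v))"
    proof -
      have CcT: "Cc K n0 s0 v = T / v" unfolding T_def by (rule Cc_T[of K n0 s0, OF K1 n0p s0p v])
      show ?thesis unfolding GG_def fK_T CcT by (simp add: T_def S_def)
    qed
    have ex: "(\<theta> / v + S / v)\<^sup>2 / (2 * A) + (X0 - \<theta>\<^sup>2 / (2 * v) + (1 / 2) * U - Z / 2)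
       = - Z / 2 + (S\<^sup>2 / (2 * v\<^sup>2 * A) + ((1 / 2) * U + (X0 + (- (inverse (1 + T) * (T / v)) * \<theta>\<^sup>2 / 2 + \<theta> * (inverse (1 + T) * S / v)))))"
      using expo[OF v T, of \<theta> S] unfolding A by simp
    have sq: "sqrt (2 * pi / A) = sqrt (2 * pi) * inverse (sqrt A)" unfolding real_sqrt_divide by (rule divide_inverse)
    show ?thesis unfolding ex exp_add sq Rf GG kap1_def c_def c0_def Z_def[symmetric]
      by (simp add: mult_ac)
  qed
  finally show ?thesis unfolding X0_def .
qed

end


lemma post_cancel:
  fixes x y :: ennreal and k :: real assumes k: "k > 0"
  shows "ennreal k * x / (ennreal k * y) = x / y"
proof -
  have "ennreal k \<noteq> 0" "ennreal k \<noteq> \<infinity>" using k by auto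
  from divide_mult_eq[OF this, of x y] show ?thesis by (simp add: mult.commute)
qed

theorem theorem2p2:
  fixes K n :: nat and n0 :: "nat \<Rightarrow> nat" and s0 :: "nat \<Rightarrow> real"
    and y0 :: "nat \<Rightarrow> nat \<Rightarrow> real" and s :: real and y :: "nat \<Rightarrow> real"
    and piv pia :: "real \<Rightarrow> real"
  assumes K: "K \<ge> 1" and n: "n \<ge> 1" and s: "s > 0"
    and n0: "\<And>k. k \<in> {1..K} \<Longrightarrow> n0 k \<ge> 1"
    and s0: "\<And>k. k \<in> {1..K} \<Longrightarrow> s0 k > 0"
    and piv_meas: "piv \<in> borel_measurable borel"
    and pia_meas: "pia \<in> borel_measurable borel"
    and piv_nonneg: "\<And>v. v > 0 \<Longrightarrow> piv v \<ge> 0"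
    and pia_nonneg: "\<And>a. a \<in> {1 / (real K + 1)<..<1} \<Longrightarrow> pia a \<ge> 0"
    and prior_match: "\<exists>c>0. \<forall>v>0.
        Qf K n0 s0 y0 v * \<bar>deriv (fK K n0 s0) v\<bar> * pia (fK K n0 s0 v)
          = c * (Rf K n0 s0 y0 v * piv v)"
    and bhm_proper: "0 < (\<integral>\<^sup>+ t. bhm_kernel K n0 s0 y0 n s y piv t \<partial>lborel)"
                    "(\<integral>\<^sup>+ t. bhm_kernel K n0 s0 y0 n s y piv t \<partial>lborel) < \<infinity>"
    and bnpp_proper: "0 < (\<integral>\<^sup>+ t. bnpp_kernel K n0 s0 y0 n s y pia t \<partial>lborel)"
                    "(\<integral>\<^sup>+ t. bnpp_kernel K n0 s0 y0 n s y pia t \<partial>lborel) < \<infinity>"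
  shows "(\<forall>\<theta>. bhm_post K n0 s0 y0 n s y piv \<theta> = bnpp_post K n0 s0 y0 n s y pia \<theta>)
       \<and> (\<forall>a0 \<in> {1 / (real K + 1)<..<1}. \<forall>k \<in> {1..K}.
            0 < hk K n0 s0 k a0 \<and> hk K n0 s0 k a0 < 1)"
proof
  note [measurable] = piv_meas pia_meas
  obtain c where c: "c > 0" and cm: "\<And>v. v > 0 \<Longrightarrow>
        Qf K n0 s0 y0 v * \<bar>deriv (fK K n0 s0) v\<bar> * pia (fK K n0 s0 v) = c * (Rf K n0 s0 y0 v * piv v)"
    using prior_match by blast
  define I where "I = {1 / (real K + 1)<..<1}"
  define \<Phi> where "\<Phi> \<theta> = exp (- real n * (mean n y - \<theta>)\<^sup>2 / (2 * s))" for \<theta>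
  define H where "H \<theta> = (\<integral>\<^sup>+ v. indicator {0<..} v * ennreal (Rf K n0 s0 y0 v * piv v * (\<Phi> \<theta> * GG K n0 s0 y0 \<theta> v)) \<partial>lborel)" for \<theta>
  have Hm: "H \<in> borel_measurable lborel" unfolding H_def \<Phi>_def by measurable
  define k1 where "k1 = kap1 K n0 s0 y0"
  have k1: "k1 > 0" unfolding k1_def by (rule kap1_pos)
  define SSy where "SSy = (\<Sum>i=1..n. (y i)\<^sup>2) - real n * (mean n y)\<^sup>2"
  define k2 where "k2 = exp (- SSy / (2 * s)) * c / sqrt (2 * pi)"
  have k2: "k2 > 0" unfolding k2_def using c by simp
  have bhm: "bhm_kernel K n0 s0 y0 n s y piv \<theta> = ennreal k1 * H \<theta>" for \<theta>
  proof -
    have "bhm_kernel K n0 s0 y0 n s y piv \<theta> = (\<integral>\<^sup>+ v. ennreal k1 * (indicator {0<..} v * ennreal (Rf K n0 s0 y0 v * piv v * (\<Phi> \<theta> * GG K n0 s0 y0 \<theta> v))) \<partial>lborel)"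
      unfolding bhm_kernel_def
    proof (intro nn_integral_cong)
      fix v :: real
      show "indicator {0<..} v * (\<integral>\<^sup>+ \<mu>. (\<integral>\<^sup>+ \<theta>0.
         ennreal (piv v * v powr (- (real K + 1) / 2) *
           exp (- real n * (mean n y - \<theta>)\<^sup>2 / (2 * s)
                - (1 / 2) * (\<Sum>k=1..K. real (n0 k) * (mean (n0 k) (y0 k) - \<theta>0 k)\<^sup>2 / s0 k)
                - (\<theta> - \<mu>)\<^sup>2 / (2 * v)
                - (1 / (2 * v)) * (\<Sum>k=1..K. (\<theta>0 k - \<mu>)\<^sup>2)))
       \<partial>(PiM {1..K} (\<lambda>_. lborel))) \<partial>lborel)
        = ennreal k1 * (indicator {0<..} v * ennreal (Rf K n0 s0 y0 v * piv v * (\<Phi> \<theta> * GG K n0 s0 y0 \<theta> v)))"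
      proof (cases "v > 0")
        case True
        have BI: "(\<integral>\<^sup>+ \<mu>. (\<integral>\<^sup>+ \<theta>0.
         ennreal (piv v * v powr (- (real K + 1) / 2) *
           exp (- real n * (mean n y - \<theta>)\<^sup>2 / (2 * s)
                - (1 / 2) * (\<Sum>k=1..K. real (n0 k) * (mean (n0 k) (y0 k) - \<theta>0 k)\<^sup>2 / s0 k)
                - (\<theta> - \<mu>)\<^sup>2 / (2 * v)
                - (1 / (2 * v)) * (\<Sum>k=1..K. (\<theta>0 k - \<mu>)\<^sup>2)))
       \<partial>(PiM {1..K} (\<lambda>_. lborel))) \<partial>lborel)
   = ennreal (kap1 K n0 s0 y0 * (Rf K n0 s0 y0 v * piv v * (exp (- real n * (mean n y - \<theta>)\<^sup>2 / (2 * s)) * GG K n0 s0 y0 \<theta> v)))"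
          by (rule bhm_inner[of K n0 s0, OF K n0 s0 piv_nonneg[OF True] True])
        show ?thesis
          unfolding BI
          using True k1 by (simp add: k1_def \<Phi>_def ennreal_mult')
      qed simp
    qed
    also have "\<dots> = ennreal k1 * H \<theta>" unfolding H_def
      by (rule nn_integral_cmult) (unfold \<Phi>_def, measurable)
    finally show ?thesis .
  qed
  have bnpp: "bnpp_kernel K n0 s0 y0 n s y pia \<theta> = ennreal k2 * H \<theta>" for \<theta>
  proof -
    define F where "F a = Qf K n0 s0 y0 (psi K n0 s0 a) * GG K n0 s0 y0 \<theta> (psi K n0 s0 a) * pia a" for a
    define \<kappa> where "\<kappa> = exp (- SSy / (2 * s)) * \<Phi> \<theta> / sqrt (2 * pi)"
    have \<kappa>: "\<kappa> \<ge> 0" unfolding \<kappa>_def \<Phi>_def by simp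
    have E: "exp (- (1 / (2 * s)) * (\<Sum>i=1..n. (y i - \<theta>)\<^sup>2)) = exp (- SSy / (2 * s)) * \<Phi> \<theta>"
      unfolding sumsq[OF n] SSy_def \<Phi>_def exp_add[symmetric]
      by (rule arg_cong[where f=exp]) (use s in \<open>simp add: field_simps\<close>)
    have [measurable]: "psi K n0 s0 \<in> borel_measurable (restrict_space borel I)"
      unfolding I_def by (rule psi_meas[of K n0 s0, OF K n0 s0])
    have [measurable]: "pia \<in> borel_measurable (restrict_space borel I)"
      by (rule measurable_restrict_space1[OF pia_meas])
    have FmR: "F \<in> borel_measurable (restrict_space borel I)"
      unfolding F_def by measurable
    have Fm: "(\<lambda>a. indicator I a * F a) \<in> borel_measurable borel"
      using FmR by (subst (asm) borel_measurable_restrict_space_iff) (auto simp: I_def)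
    have Fnn: "F a \<ge> 0" if a: "a \<in> I" for a
    proof -
      have v: "psi K n0 s0 a > 0" using psi_pos[of K n0 s0, OF K n0 s0] a unfolding I_def by blast
      have "fK K n0 s0 (psi K n0 s0 a) > 0" unfolding fK_T using Tk_pos[of K n0 s0, OF K n0 s0 v] by simp
      moreover have "Cc K n0 s0 (psi K n0 s0 a) > 0" by (rule Cc_pos[of K n0 s0, OF K n0 s0 v])
      ultimately have "Qf K n0 s0 y0 (psi K n0 s0 a) \<ge> 0" unfolding Qf_def by simp
      then show ?thesis unfolding F_def using GG_pos[of K n0 s0 y0 \<theta>] pia_nonneg[OF a[unfolded I_def]]
        by (simp add: less_imp_le)
    qed
    have "bnpp_kernel K n0 s0 y0 n s y pia \<theta> = (\<integral>\<^sup>+ a. ennreal \<kappa> * ennreal (indicator I a * F a) \<partial>lborel)"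
      unfolding bnpp_kernel_def
    proof (intro nn_integral_cong)
      fix a :: real
      show "indicator {1 / (real K + 1)<..<1} a *
       ennreal (exp (- (1 / (2 * s)) * (\<Sum>i=1..n. (y i - \<theta>)\<^sup>2)) *
         (\<Prod>k=1..K. Lk n0 s0 y0 k \<theta> powr hk K n0 s0 k a) / cnorm K n0 s0 y0 a * pia a)
        = ennreal \<kappa> * ennreal (indicator I a * F a)"
      proof (cases "a \<in> I")
        case True
        have "exp (- (1 / (2 * s)) * (\<Sum>i=1..n. (y i - \<theta>)\<^sup>2)) *
           (\<Prod>k=1..K. Lk n0 s0 y0 k \<theta> powr hk K n0 s0 k a) / cnorm K n0 s0 y0 a * pia a
           = exp (- (1 / (2 * s)) * (\<Sum>i=1..n. (y i - \<theta>)\<^sup>2)) *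
           ((\<Prod>k=1..K. Lk n0 s0 y0 k \<theta> powr hk K n0 s0 k a) / cnorm K n0 s0 y0 a) * pia a" by simp
        also have "\<dots> = \<kappa> * F a"
        proof -
          have BP: "(\<Prod>k=1..K. Lk n0 s0 y0 k \<theta> powr hk K n0 s0 k a) / cnorm K n0 s0 y0 a
             = Qf K n0 s0 y0 (psi K n0 s0 a) / sqrt (2 * pi) * GG K n0 s0 y0 \<theta> (psi K n0 s0 a)"
            by (rule bnpp_point[of K n0 s0, OF K n0 s0 True[unfolded I_def]])
          show ?thesis unfolding BP E \<kappa>_def F_def by simp
        qed
        finally show ?thesis using True \<kappa> unfolding I_def by (simp add: ennreal_mult')
      qed (simp add: I_def)
    qed
    also have "\<dots> = ennreal \<kappa> * (\<integral>\<^sup>+ a. ennreal (indicator I a * F a) \<partial>lborel)"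
      by (rule nn_integral_cmult) (use Fm in measurable)
    also have "(\<integral>\<^sup>+ a. ennreal (indicator I a * F a) \<partial>lborel)
        = (\<integral>\<^sup>+ v. ennreal (indicator {0<..} v * (F (fK K n0 s0 v) * - DK K n0 s0 v)) \<partial>lborel)"
      unfolding I_def
    proof (rule subst_decr)
      show "(\<lambda>a. indicator {1 / (real K + 1)<..<1} a * F a) \<in> borel_measurable borel" using Fm unfolding I_def .
      show "fK K n0 s0 ` {0<..} = {1 / (real K + 1)<..<1}" by (rule fK_surj[of K n0 s0, OF K n0 s0])
    qed (auto intro: fK_deriv[of K n0 s0, OF K n0 s0] DK_cont[of K n0 s0, OF K n0 s0] DK_np[of K n0 s0, OF K n0 s0]
           fK_surj[of K n0 s0, OF K n0 s0] fK_anti[of K n0 s0, OF K n0 s0] Fnn[unfolded I_def])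
    also have "\<dots> = (\<integral>\<^sup>+ v. ennreal (indicator {0<..} v * (c * (Rf K n0 s0 y0 v * piv v) * GG K n0 s0 y0 \<theta> v)) \<partial>lborel)"
    proof (intro nn_integral_cong)
      fix v :: real
      show "ennreal (indicator {0<..} v * (F (fK K n0 s0 v) * - DK K n0 s0 v)) =
            ennreal (indicator {0<..} v * (c * (Rf K n0 s0 y0 v * piv v) * GG K n0 s0 y0 \<theta> v))"
      proof (cases "v > 0")
        case True
        have d: "- DK K n0 s0 v = \<bar>deriv (fK K n0 s0) v\<bar>"
          using deriv_fK[of K n0 s0, OF K n0 s0 True] DK_np[of K n0 s0, OF K n0 s0 True] by simp
        have "F (fK K n0 s0 v) * - DK K n0 s0 v
           = (Qf K n0 s0 y0 v * \<bar>deriv (fK K n0 s0) v\<bar> * pia (fK K n0 s0 v)) * GG K n0 s0 y0 \<theta> v"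
        proof -
          have FP: "psi K n0 s0 (fK K n0 s0 v) = v" by (rule f_psi[of K n0 s0, OF K n0 s0 True])
          show ?thesis unfolding F_def FP d by (simp only: mult_ac)
        qed
        also have "\<dots> = c * (Rf K n0 s0 y0 v * piv v) * GG K n0 s0 y0 \<theta> v" unfolding cm[OF True] ..
        finally show ?thesis using True by simp
      qed simp
    qed
    finally have X: "bnpp_kernel K n0 s0 y0 n s y pia \<theta> = ennreal \<kappa> *
       (\<integral>\<^sup>+ v. ennreal (indicator {0<..} v * (c * (Rf K n0 s0 y0 v * piv v) * GG K n0 s0 y0 \<theta> v)) \<partial>lborel)" .
    also have "\<dots> = (\<integral>\<^sup>+ v. ennreal \<kappa> * ennreal (indicator {0<..} v * (c * (Rf K n0 s0 y0 v * piv v) * GG K n0 s0 y0 \<theta> v)) \<partial>lborel)"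
      by (rule nn_integral_cmult[symmetric]) measurable
    also have "\<dots> = (\<integral>\<^sup>+ v. ennreal k2 * (indicator {0<..} v * ennreal (Rf K n0 s0 y0 v * piv v * (\<Phi> \<theta> * GG K n0 s0 y0 \<theta> v))) \<partial>lborel)"
    proof (intro nn_integral_cong)
      fix v :: real
      have e: "\<kappa> * (c * (Rf K n0 s0 y0 v * piv v) * GG K n0 s0 y0 \<theta> v) = k2 * (Rf K n0 s0 y0 v * piv v * (\<Phi> \<theta> * GG K n0 s0 y0 \<theta> v))"
        unfolding \<kappa>_def k2_def by (simp add: mult_ac)
      show "ennreal \<kappa> * ennreal (indicator {0<..} v * (c * (Rf K n0 s0 y0 v * piv v) * GG K n0 s0 y0 \<theta> v)) =
            ennreal k2 * (indicator {0<..} v * ennreal (Rf K n0 s0 y0 v * piv v * (\<Phi> \<theta> * GG K n0 s0 y0 \<theta> v)))"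
      proof (cases "v > 0")
        case True
        have "ennreal \<kappa> * ennreal (c * (Rf K n0 s0 y0 v * piv v) * GG K n0 s0 y0 \<theta> v)
           = ennreal (\<kappa> * (c * (Rf K n0 s0 y0 v * piv v) * GG K n0 s0 y0 \<theta> v))" using \<kappa> by (simp add: ennreal_mult')
        also have "\<dots> = ennreal k2 * ennreal (Rf K n0 s0 y0 v * piv v * (\<Phi> \<theta> * GG K n0 s0 y0 \<theta> v))"
          unfolding e using k2 by (simp add: ennreal_mult')
        finally show ?thesis using True by simp
      qed simp
    qed
    also have "\<dots> = ennreal k2 * H \<theta>" unfolding H_def
      by (rule nn_integral_cmult) (unfold \<Phi>_def, measurable)
    finally show ?thesis .
  qed
  show "\<forall>\<theta>. bhm_post K n0 s0 y0 n s y piv \<theta> = bnpp_post K n0 s0 y0 n s y pia \<theta>"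
  proof
    fix \<theta>
    have i1: "(\<integral>\<^sup>+ t. bhm_kernel K n0 s0 y0 n s y piv t \<partial>lborel) = ennreal k1 * (\<integral>\<^sup>+ t. H t \<partial>lborel)"
      unfolding bhm by (rule nn_integral_cmult[OF Hm])
    have i2: "(\<integral>\<^sup>+ t. bnpp_kernel K n0 s0 y0 n s y pia t \<partial>lborel) = ennreal k2 * (\<integral>\<^sup>+ t. H t \<partial>lborel)"
      unfolding bnpp by (rule nn_integral_cmult[OF Hm])
    show "bhm_post K n0 s0 y0 n s y piv \<theta> = bnpp_post K n0 s0 y0 n s y pia \<theta>"
      unfolding bhm_post_def bnpp_post_def i1 i2 bhm bnpp post_cancel[OF k1] post_cancel[OF k2] ..
  qed
  show "\<forall>a0 \<in> {1 / (real K + 1)<..<1}. \<forall>k \<in> {1..K}. 0 < hk K n0 s0 k a0 \<and> hk K n0 s0 k a0 < 1"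
    using hk_bounds[of K n0 s0, OF K n0 s0] by blast
qed


end
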